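(* Let $V$ be an $n$-dimensional real vector space, $\Gamma\subset V$ a lattice of rank $n$, $\Lambda\subset V^*$ the dual lattice, and $\mathcal{A}$ a finite set of hyperplanes through $0$ in $V$, each the zero set of some element of $\Lambda$, with $\bigcap\mathcal{A}=\{0\}$. Let $\Delta$ be a chamber of $V^*\setminus(\Lambda+\bigcup\check{\mathcal{A}})$. Let $C=(H_1,\dots,H_{n+1})$ be an ordered circuit of $\mathcal{A}$ with $n+1$ elements, and let $C[i]$ be the ordered $n$-tuple obtained by omitting $H_i$. Then $$\sum_{i=1}^{n+1}(-1)^i\mu_\Delta(C[i])=0$$ as meromorphic $n$-forms on $V_{\mathbb{C}}$.
   Context: A circuit is a minimally dependent subset of $\mathcal{A}$ (dependence meaning linear dependence of defining forms): it is dependent but removing any element makes it independent; so each $C[i]$ is an ordered linearly independent $n$-tuple. $V_{\mathbb{C}}$ is the complexification of $V$; elements $y\in V^*$ are complex linear functions on $V_{\mathbb{C}}$ and $\exp(y)$ denotes $v\mapsto e^{\langle y,v\rangle}$; $\mathrm{td}(x)=dx/(1-\exp(x))$. $\check{\mathcal{A}}$ is the arrangement in $V^*$ of the hyperplanes $L^\perp$, for $L\subset V$ ranging over one-dimensional subspaces that are intersections of hyperplanes of $\mathcal{A}$; a chamber is a connected component of $V^*$ minus the union of all $\Lambda$-translates of these hyperplanes. For an ordered linearly independent $n$-tuple $S=(H_1,\dots,H_n)$ of elements of $\mathcal{A}$, choose $x_i\in\Lambda$ defining $H_i$, put $\vec x=(x_1,\dots,x_n)$, $\mathrm{cube}(\vec{x})=\{\sum\lambda_ix_i:0\le\lambda_i<1\}$,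 $\mathrm{vol}(\vec x)=[\Lambda:\mathbb{Z}x_1+\dots+\mathbb{Z}x_n]$, choose $t\in\Delta$, and set $\mu_\Delta(S)=\frac{1}{\mathrm{vol}(\vec{x})}\mathrm{td}(x_1)\wedge\dots\wedge\mathrm{td}(x_n)\sum_{y\in\Lambda\cap(\mathrm{cube}(\vec{x})-t)}\exp(y)$; this form does not depend on the choices of the $x_i$ and of $t\in\Delta$. *)

theory Defs
  imports "HOL-Analysis.Analysis"
begin

text \<open>V is modelled as real^'n, and V^* is identified with real^'n via the
  inner product: y in V^* acts by v |-> y \<bullet> v.  V_C is complex^'n.\<close>

definition full_lattice :: "(real^'n) set \<Rightarrow> bool" where
  "full_lattice \<Gamma> \<longleftrightarrow> (\<exists>b :: 'n \<Rightarrow> real^'n. inj b \<and> independent (range b) \<and>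
      \<Gamma> = {\<Sum>i\<in>UNIV. of_int (k i) *\<^sub>R b i | k. True})"

definition dual_lattice :: "(real^'n) set \<Rightarrow> (real^'n) set" where
  "dual_lattice \<Gamma> = {y. \<forall>g\<in>\<Gamma>. y \<bullet> g \<in> \<int>}"

definition defines_hyp :: "real^'n \<Rightarrow> (real^'n) set \<Rightarrow> bool" where
  "defines_hyp x H \<longleftrightarrow> x \<noteq> 0 \<and> H = {v. x \<bullet> v = 0}"

definition hyp_indep :: "(real^'n) set set \<Rightarrow> bool" where
  "hyp_indep S \<longleftrightarrow> (\<exists>f. (\<forall>H\<in>S. defines_hyp (f H) H) \<and> inj_on f S \<and> independent (f ` S))"

definition is_circuit :: "(real^'n) set set \<Rightarrow> (real^'n) set set \<Rightarrow> bool" where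
  "is_circuit \<A> S \<longleftrightarrow> S \<subseteq> \<A> \<and> \<not> hyp_indep S \<and> (\<forall>H\<in>S. hyp_indep (S - {H}))"

text \<open>Union of the hyperplanes L^perp of the dual arrangement, L ranging over
  one-dimensional subspaces that are intersections of hyperplanes of A
  (the empty intersection, V itself, included).\<close>
definition dual_arr_union :: "(real^'n) set set \<Rightarrow> (real^'n) set" where
  "dual_arr_union \<A> = \<Union>{ {y. \<forall>v\<in>L. y \<bullet> v = 0} | L. \<exists>S\<subseteq>\<A>. L = \<Inter>S \<and> dim L = 1}"

definition chamber_set :: "(real^'n) set \<Rightarrow> (real^'n) set set \<Rightarrow> (real^'n) set" where
  "chamber_set \<Lambda> \<A> = UNIV - (\<Union>l\<in>\<Lambda>. (\<lambda>y. l + y) ` dual_arr_union \<A>)"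

definition cube :: "(real^'n) list \<Rightarrow> (real^'n) set" where
  "cube xs = {\<Sum>j<length xs. l j *\<^sub>R xs ! j | l. \<forall>j<length xs. 0 \<le> l j \<and> l j < 1}"

definition int_span :: "(real^'n) list \<Rightarrow> (real^'n) set" where
  "int_span xs = {\<Sum>j<length xs. of_int (k j) *\<^sub>R xs ! j | k. True}"

text \<open>vol(x) = index [Lambda : Z x_1 + ... + Z x_n] = number of cosets.\<close>
definition lattice_index :: "(real^'n) set \<Rightarrow> (real^'n) list \<Rightarrow> nat" where
  "lattice_index \<Lambda> xs = card ((\<lambda>y. (\<lambda>w. y + w) ` int_span xs) ` \<Lambda>)"

text \<open>A fixed enumeration of the coordinate index type, used to identify
  n-forms on V_C with functions (coefficient of a fixed volume form).\<close>
definition idx :: "'n::finite \<Rightarrow> nat" where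
  "idx = (SOME f. bij_betw f (UNIV :: 'n set) {..<CARD('n)})"

definition list_det :: "(real^'n::finite) list \<Rightarrow> real" where
  "list_det xs = det (\<chi> r. xs ! idx r)"

definition cpair :: "real^'n \<Rightarrow> complex^'n \<Rightarrow> complex" where
  "cpair y z = (\<Sum>k\<in>UNIV. complex_of_real (y $ k) * z $ k)"

text \<open>Coefficient function of mu_Delta(S) with respect to the volume form
  dz_(idx^-1 0) \<and> ... \<and> dz_(idx^-1 (n-1)), for chosen defining vectors xs
  and t in Delta: dx_1\<and>...\<and>dx_n = det(x_1..x_n) dz, and
  td(x) = dx/(1 - exp x).\<close>
definition mu_coef :: "(real^'n::finite) set \<Rightarrow> (real^'n) list \<Rightarrow> real^'n \<Rightarrow> complex^'n \<Rightarrow> complex" where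
  "mu_coef \<Lambda> xs t z =
     (1 / of_nat (lattice_index \<Lambda> xs)) * complex_of_real (list_det xs) *
     (\<Prod>j<length xs. 1 / (1 - exp (cpair (xs ! j) z))) *
     (\<Sum>y\<in>{y\<in>\<Lambda>. y + t \<in> cube xs}. exp (cpair y z))"

end

theory Submission
  imports Defs
begin

definition goodl :: "(real^'n) list \<Rightarrow> bool" where
  "goodl S \<longleftrightarrow> length S = CARD('n) \<and> distinct S \<and> independent (set S)"

definition crd :: "(real^'n) list \<Rightarrow> real^'n \<Rightarrow> nat \<Rightarrow> real" where
  "crd S v j = representation (set S) v (S!j)"

lemma sum_nth_set:
  assumes "distinct S"
  shows "(\<Sum>j<length S. g (S!j)) = (\<Sum>v\<in>set S. g v)"
proof -
  have "inj_on (nth S) {..<length S}" using assms by (simp add: inj_on_def nth_eq_iff_index_eq)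
  moreover have "nth S ` {..<length S} = set S" by (auto simp: set_conv_nth)
  ultimately show ?thesis using sum.reindex[of "nth S" "{..<length S}" g] by simp
qed

lemma goodl_span:
  fixes S :: "(real^'n) list"
  assumes "goodl S" shows "span (set S) = UNIV"
proof -
  have "dim (UNIV :: (real^'n) set) \<le> card (set S)"
    using assms by (simp add: goodl_def distinct_card)
  then have "UNIV \<subseteq> span (set S)"
    using card_ge_dim_independent[of "set S" UNIV] assms by (auto simp: goodl_def)
  then show ?thesis by auto
qed

lemma crd_sum:
  fixes S :: "(real^'n) list"
  assumes "goodl S" shows "(\<Sum>j<CARD('n). crd S v j *\<^sub>R S!j) = v"
proof -
  have "(\<Sum>j<CARD('n). crd S v j *\<^sub>R S!j) = (\<Sum>b\<in>set S. representation (set S) v b *\<^sub>R b)"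
    using sum_nth_set[of S "\<lambda>b. representation (set S) v b *\<^sub>R b"] assms
    by (simp add: goodl_def crd_def)
  also have "\<dots> = v"
    by (rule sum_representation_eq) (use assms goodl_span in \<open>auto simp: goodl_def\<close>)
  finally show ?thesis .
qed

lemma goodl_lincomb_zero:
  fixes S :: "(real^'n) list"
  assumes "goodl S" "(\<Sum>j<CARD('n). l j *\<^sub>R S!j) = 0" "j < CARD('n)"
  shows "l j = 0"
proof -
  have d: "distinct S" and len: "length S = CARD('n)" and ind: "independent (set S)"
    using assms by (auto simp: goodl_def)
  define c where "c v = l (the_inv_into {..<CARD('n)} (nth S) v)" for v
  have inj: "inj_on (nth S) {..<CARD('n)}" using d len by (simp add: inj_on_def nth_eq_iff_index_eq)
  have cS: "c (S!k) = l k" if "k < CARD('n)" for k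
    unfolding c_def using the_inv_into_f_f[OF inj] that by simp
  have "(\<Sum>v\<in>set S. c v *\<^sub>R v) = (\<Sum>k<CARD('n). c (S!k) *\<^sub>R S!k)"
    using sum_nth_set[of S "\<lambda>v. c v *\<^sub>R v"] d len by simp
  also have "\<dots> = (\<Sum>k<CARD('n). l k *\<^sub>R S!k)" by (rule sum.cong) (auto simp: cS)
  finally have "(\<Sum>v\<in>set S. c v *\<^sub>R v) = 0" using assms(2) by simp
  then have "\<forall>v\<in>set S. c v = 0" using ind independent_explicit by blast
  then have "c (S!j) = 0" using assms(3) len by simp
  then show ?thesis using cS assms(3) by simp
qed

lemma crd_unique:
  fixes S :: "(real^'n) list"
  assumes "goodl S" "(\<Sum>j<CARD('n). l j *\<^sub>R S!j) = v" "j < CARD('n)"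
  shows "crd S v j = l j"
proof -
  have "(\<Sum>j<CARD('n). (crd S v j - l j) *\<^sub>R S!j) = 0"
    using crd_sum[OF assms(1), of v] assms(2) by (simp add: scaleR_diff_left sum_subtractf)
  from goodl_lincomb_zero[OF assms(1) this assms(3)] show ?thesis by simp
qed

lemma crd_add: "goodl (S::(real^'n) list) \<Longrightarrow> j < CARD('n) \<Longrightarrow> crd S (u + v) j = crd S u j + crd S v j"
proof (rule crd_unique)
  assume g: "goodl S"
  have "(\<Sum>j<CARD('n). (crd S u j + crd S v j) *\<^sub>R S!j) = (\<Sum>j<CARD('n). crd S u j *\<^sub>R S!j) + (\<Sum>j<CARD('n). crd S v j *\<^sub>R S!j)"
    by (simp add: scaleR_add_left sum.distrib)
  then show "(\<Sum>j<CARD('n). (crd S u j + crd S v j) *\<^sub>R S!j) = u + v" using crd_sum[OF g] by simp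
qed

lemma crd_scale: "goodl (S::(real^'n) list) \<Longrightarrow> j < CARD('n) \<Longrightarrow> crd S (r *\<^sub>R u) j = r * crd S u j"
proof (rule crd_unique)
  assume g: "goodl S"
  have "(\<Sum>j<CARD('n). (r * crd S u j) *\<^sub>R S!j) = r *\<^sub>R (\<Sum>j<CARD('n). crd S u j *\<^sub>R S!j)"
    by (simp add: scaleR_sum_right)
  then show "(\<Sum>j<CARD('n). (r * crd S u j) *\<^sub>R S!j) = r *\<^sub>R u" using crd_sum[OF g] by simp
qed

lemma crd_minus: "goodl (S::(real^'n) list) \<Longrightarrow> j < CARD('n) \<Longrightarrow> crd S (u - v) j = crd S u j - crd S v j"
proof -
  assume a: "goodl S" "j < CARD('n)"
  have "u - v = u + (-1) *\<^sub>R v" by simp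
  then show ?thesis using crd_add[OF a, of u "(-1) *\<^sub>R v"] crd_scale[OF a, of "-1" v] by simp
qed

lemma crd_nth: "goodl (S::(real^'n) list) \<Longrightarrow> j < CARD('n) \<Longrightarrow> k < CARD('n) \<Longrightarrow> crd S (S!k) j = (if j = k then 1 else 0)"
proof (rule crd_unique)
  assume "goodl S" "j < CARD('n)" "k < CARD('n)"
  have "(\<Sum>j<CARD('n). (if j = k then 1 else 0) *\<^sub>R S!j) = (\<Sum>j<CARD('n). if j = k then S!j else 0)"
    by (rule sum.cong) auto
  also have "\<dots> = S!k" using \<open>k < CARD('n)\<close> by simp
  finally show "(\<Sum>j<CARD('n). (if j = k then 1 else 0) *\<^sub>R S!j) = S!k" .
qed

lemma cube_crd:
  fixes S :: "(real^'n) list"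
  assumes "goodl S"
  shows "v \<in> cube S \<longleftrightarrow> (\<forall>j<CARD('n). 0 \<le> crd S v j \<and> crd S v j < 1)"
proof
  assume "v \<in> cube S"
  then obtain l where l: "\<forall>j<CARD('n). 0 \<le> l j \<and> l j < 1" "v = (\<Sum>j<CARD('n). l j *\<^sub>R S!j)"
    using assms by (auto simp: cube_def goodl_def)
  then show "\<forall>j<CARD('n). 0 \<le> crd S v j \<and> crd S v j < 1"
    using crd_unique[OF assms l(2)[symmetric]] by auto
next
  assume "\<forall>j<CARD('n). 0 \<le> crd S v j \<and> crd S v j < 1"
  moreover have "length S = CARD('n)" using assms by (simp add: goodl_def)
  ultimately show "v \<in> cube S" using crd_sum[OF assms, of v]
    unfolding cube_def by (intro CollectI exI[of _ "crd S v"]) simp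
qed

lemma linear_crd: "goodl (S::(real^'n) list) \<Longrightarrow> j < CARD('n) \<Longrightarrow> linear (\<lambda>v. crd S v j)"
  by (rule linearI) (auto simp: crd_add crd_scale)

lemma continuous_crd: "goodl (S::(real^'n) list) \<Longrightarrow> j < CARD('n) \<Longrightarrow> continuous_on A (\<lambda>v. crd S v j)"
  by (intro linear_continuous_on linear_conv_bounded_linear[THEN iffD1] linear_crd)


lemma dl_0: "0 \<in> dual_lattice G" by (simp add: dual_lattice_def)
lemma dl_add: "a \<in> dual_lattice G \<Longrightarrow> b \<in> dual_lattice G \<Longrightarrow> a + b \<in> dual_lattice G"
  by (auto simp: dual_lattice_def inner_add_left)
lemma dl_uminus: "a \<in> dual_lattice G \<Longrightarrow> - a \<in> dual_lattice G"
  by (auto simp: dual_lattice_def)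
lemma dl_diff: "a \<in> dual_lattice G \<Longrightarrow> b \<in> dual_lattice G \<Longrightarrow> a - b \<in> dual_lattice G"
  using dl_add[of a G "-b"] dl_uminus[of b G] by simp
lemma dl_intmult: "a \<in> dual_lattice G \<Longrightarrow> of_int k *\<^sub>R a \<in> dual_lattice G"
  by (auto simp: dual_lattice_def)
lemma dl_sum: "(\<And>i. i \<in> I \<Longrightarrow> f i \<in> dual_lattice G) \<Longrightarrow> sum f I \<in> dual_lattice G"
  by (induction I rule: infinite_finite_induct) (auto intro: dl_0 dl_add)

lemma full_lattice_basis:
  fixes G :: "(real^'n) set"
  assumes "full_lattice G"
  obtains b :: "'n \<Rightarrow> real^'n" where "\<And>k. b k \<in> G" "\<And>y. (\<forall>k. y \<bullet> b k = 0) \<Longrightarrow> y = 0"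
    "\<And>y. y \<in> dual_lattice G \<longleftrightarrow> (\<forall>k. y \<bullet> b k \<in> \<int>)"
proof -
  from assms obtain b :: "'n \<Rightarrow> real^'n" where b: "inj b" "independent (range b)"
    "G = {\<Sum>i\<in>UNIV. of_int (k i) *\<^sub>R b i | k. True}" by (auto simp: full_lattice_def)
  have bG: "b k \<in> G" for k
  proof -
    have "(\<Sum>i\<in>UNIV. of_int (if i = k then 1 else 0) *\<^sub>R b i) = (\<Sum>i\<in>UNIV. if i = k then b i else 0)"
      by (rule sum.cong) auto
    also have "\<dots> = b k" by simp
    finally show ?thesis unfolding b(3) by (intro CollectI exI[of _ "\<lambda>i. if i = k then 1 else 0"]) simp
  qed
  have sp: "span (range b) = UNIV"
  proof -
    have "card (range b) = CARD('n)" using b(1) by (simp add: card_image)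
    then have "UNIV \<subseteq> span (range b)"
      using card_ge_dim_independent[of "range b" UNIV] b(2) by auto
    then show ?thesis by auto
  qed
  have zero: "y = 0" if "\<forall>k. y \<bullet> b k = 0" for y
  proof -
    have "\<forall>v \<in> span (range b). y \<bullet> v = 0"
    proof
      fix v assume "v \<in> span (range b)"
      then show "y \<bullet> v = 0"
        by (induction rule: span_induct) (use that in \<open>auto simp: subspace_def inner_add_right\<close>)
    qed
    then have "y \<bullet> y = 0" using sp by auto
    then show ?thesis by simp
  qed
  have mem: "y \<in> dual_lattice G \<longleftrightarrow> (\<forall>k. y \<bullet> b k \<in> \<int>)" for y
  proof
    assume "y \<in> dual_lattice G" then show "\<forall>k. y \<bullet> b k \<in> \<int>" using bG by (auto simp: dual_lattice_def)
  next
    assume a: "\<forall>k. y \<bullet> b k \<in> \<int>"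
    show "y \<in> dual_lattice G" unfolding dual_lattice_def b(3)
    proof (clarify)
      fix k :: "'n \<Rightarrow> int"
      have "y \<bullet> (\<Sum>i\<in>UNIV. of_int (k i) *\<^sub>R b i) = (\<Sum>i\<in>UNIV. of_int (k i) * (y \<bullet> b i))"
        by (simp add: inner_sum_right)
      also have "\<dots> \<in> \<int>" using a by (intro Ints_sum Ints_mult) auto
      finally show "y \<bullet> (\<Sum>i\<in>UNIV. of_int (k i) *\<^sub>R b i) \<in> \<int>" .
    qed
  qed
  show ?thesis using that bG zero mem by blast
qed

lemma finite_dl_bounded:
  fixes G :: "(real^'n) set"
  assumes "full_lattice G"
  shows "finite (dual_lattice G \<inter> cball 0 R)"
proof -
  obtain b :: "'n \<Rightarrow> real^'n" where b: "\<And>k. b k \<in> G" "\<And>y. (\<forall>k. y \<bullet> b k = 0) \<Longrightarrow> y = 0"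
    "\<And>y. y \<in> dual_lattice G \<longleftrightarrow> (\<forall>k. y \<bullet> b k \<in> \<int>)"
    using full_lattice_basis[OF assms] by metis
  define M where "M = (\<Sum>k\<in>UNIV. norm (b k))"
  define N where "N = nat (ceiling (R * M))"
  define \<phi> where "\<phi> y = (\<chi> k. y \<bullet> b k)" for y
  have inj: "inj \<phi>"
  proof (rule injI)
    fix x y assume "\<phi> x = \<phi> y"
    then have "\<forall>k. (x - y) \<bullet> b k = 0" by (auto simp: \<phi>_def vec_eq_iff inner_diff_left)
    then show "x = y" using b(2) by fastforce
  qed
  have sub: "\<phi> ` (dual_lattice G \<inter> cball 0 R) \<subseteq> (\<lambda>f. \<chi> k. of_int (f k)) ` (PiE UNIV (\<lambda>_. {- int N..int N}))"
  proof
    fix w assume "w \<in> \<phi> ` (dual_lattice G \<inter> cball 0 R)"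
    then obtain y where y: "y \<in> dual_lattice G" "norm y \<le> R" "w = \<phi> y" by auto
    have "\<forall>k. \<exists>m. y \<bullet> b k = of_int m" using y(1) b(3) by (metis Ints_cases)
    then obtain f where f: "\<And>k. y \<bullet> b k = of_int (f k)" by metis
    have bd: "\<bar>f k\<bar> \<le> int N" for k
    proof -
      have "\<bar>y \<bullet> b k\<bar> \<le> norm y * norm (b k)" by (rule Cauchy_Schwarz_ineq2)
      also have "\<dots> \<le> R * norm (b k)" using y(2) by (simp add: mult_right_mono)
      also have "\<dots> \<le> R * M"
      proof -
        have "norm (b k) \<le> M" unfolding M_def by (rule member_le_sum) auto
        moreover have "R \<ge> 0" using y(2) norm_ge_zero[of y] by linarith
        ultimately show ?thesis by (simp add: mult_left_mono)
      qed
      finally have "\<bar>real_of_int (f k)\<bar> \<le> R * M" using f by simp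
      then show ?thesis unfolding N_def by linarith
    qed
    show "w \<in> (\<lambda>f. \<chi> k. of_int (f k)) ` (PiE UNIV (\<lambda>_. {- int N..int N}))"
    proof
      show "restrict f UNIV \<in> PiE UNIV (\<lambda>_. {- int N..int N})" using bd by (auto simp: abs_le_iff) (smt (verit) bd)
      show "w = (\<chi> k. of_int (restrict f UNIV k))" using y(3) f by (simp add: \<phi>_def)
    qed
  qed
  have "finite ((\<lambda>f. \<chi> k. of_int (f k) :: real^'n) ` (PiE UNIV (\<lambda>_. {- int N..int N})))"
    by (intro finite_imageI finite_PiE) auto
  then have "finite (\<phi> ` (dual_lattice G \<inter> cball 0 R))" using sub finite_subset by blast
  then show ?thesis by (rule finite_imageD) (rule inj_on_subset[OF inj subset_UNIV])
qed


definition acell :: "(real^'n) set \<Rightarrow> (real^'n) list \<Rightarrow> real^'n \<Rightarrow> (real^'n) set" where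
  "acell L S t = {y\<in>L. y + t \<in> cube S}"

lemma int_span_I: "v = (\<Sum>j<length S. of_int (k j) *\<^sub>R S!j) \<Longrightarrow> v \<in> int_span S"
  unfolding int_span_def by blast

lemma int_span_0: "0 \<in> int_span S"
  unfolding int_span_def by (intro CollectI exI[of _ "\<lambda>_. 0"]) simp

lemma int_span_add: "a \<in> int_span S \<Longrightarrow> b \<in> int_span S \<Longrightarrow> a + b \<in> int_span S"
proof -
  assume "a \<in> int_span S" "b \<in> int_span S"
  then obtain k m where "a = (\<Sum>j<length S. of_int (k j) *\<^sub>R S!j)" "b = (\<Sum>j<length S. of_int (m j) *\<^sub>R S!j)"
    by (auto simp: int_span_def)
  then have "a + b = (\<Sum>j<length S. of_int (k j + m j) *\<^sub>R S!j)"
    by (simp add: sum.distrib scaleR_add_left)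
  then show ?thesis by (rule int_span_I)
qed

lemma int_span_uminus: "a \<in> int_span S \<Longrightarrow> - a \<in> int_span S"
proof -
  assume "a \<in> int_span S"
  then obtain k where "a = (\<Sum>j<length S. of_int (k j) *\<^sub>R S!j)"
    by (auto simp: int_span_def)
  then have "- a = (\<Sum>j<length S. of_int (- k j) *\<^sub>R S!j)"
    by (simp add: sum_negf)
  then show ?thesis by (rule int_span_I)
qed

lemma int_span_diff: "a \<in> int_span S \<Longrightarrow> b \<in> int_span S \<Longrightarrow> a - b \<in> int_span S"
  using int_span_add[of a S "-b"] int_span_uminus[of b S] by simp

lemma int_span_sub_dl: "set S \<subseteq> dual_lattice G \<Longrightarrow> int_span S \<subseteq> dual_lattice G"
  unfolding int_span_def by (auto intro!: dl_sum dl_intmult)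

lemma crd_int_span:
  fixes S :: "(real^'n) list"
  assumes "goodl S" "g \<in> int_span S" "j < CARD('n)"
  shows "crd S g j \<in> \<int>"
proof -
  obtain k where "g = (\<Sum>j<length S. of_int (k j) *\<^sub>R S!j)" using assms(2) by (auto simp: int_span_def)
  then have "crd S g j = of_int (k j)" using assms by (intro crd_unique) (auto simp: goodl_def)
  then show ?thesis by simp
qed

lemma int_crd_in_span:
  fixes S :: "(real^'n) list"
  assumes "goodl S" "\<And>j. j < CARD('n) \<Longrightarrow> crd S g j \<in> \<int>"
  shows "g \<in> int_span S"
proof -
  have "\<forall>j. \<exists>m. j < CARD('n) \<longrightarrow> crd S g j = of_int m" using assms(2) by (metis Ints_cases)
  then obtain k where k: "\<And>j. j < CARD('n) \<Longrightarrow> crd S g j = of_int (k j)" by metis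
  have "g = (\<Sum>j<CARD('n). crd S g j *\<^sub>R S!j)" using crd_sum[OF assms(1)] by simp
  also have "\<dots> = (\<Sum>j<length S. of_int (k j) *\<^sub>R S!j)" using assms(1) k by (auto simp: goodl_def)
  finally show ?thesis unfolding int_span_def by blast
qed

lemma cube_bounded: "cube S \<subseteq> cball 0 (\<Sum>j<length S. norm (S!j))"
proof
  fix v assume "v \<in> cube S"
  then obtain l where l: "\<forall>j<length S. 0 \<le> l j \<and> l j < 1" "v = (\<Sum>j<length S. l j *\<^sub>R S!j)"
    by (auto simp: cube_def)
  have "norm v \<le> (\<Sum>j<length S. norm (l j *\<^sub>R S!j))" unfolding l(2) by (rule norm_sum)
  also have "\<dots> \<le> (\<Sum>j<length S. norm (S!j))"
  proof (rule sum_mono)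
    fix j assume "j \<in> {..<length S}"
    then have "\<bar>l j\<bar> \<le> 1" using l(1) by auto
    then show "norm (l j *\<^sub>R S!j) \<le> norm (S!j)" by (simp add: mult_left_le_one_le)
  qed
  finally show "v \<in> cball 0 (\<Sum>j<length S. norm (S!j))" by simp
qed

lemma finite_acell:
  fixes G :: "(real^'n) set"
  assumes "full_lattice G"
  shows "finite (acell (dual_lattice G) S t)"
proof -
  have "acell (dual_lattice G) S t \<subseteq> dual_lattice G \<inter> cball 0 ((\<Sum>j<length S. norm (S!j)) + norm t)"
  proof
    fix y assume "y \<in> acell (dual_lattice G) S t"
    then have y: "y \<in> dual_lattice G" "norm (y + t) \<le> (\<Sum>j<length S. norm (S!j))"
      using cube_bounded[of S] by (auto simp: acell_def)
    have "norm y \<le> norm (y + t) + norm t" using norm_triangle_ineq4[of "y+t" t] by simp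
    then show "y \<in> dual_lattice G \<inter> cball 0 ((\<Sum>j<length S. norm (S!j)) + norm t)" using y by auto
  qed
  then show ?thesis using finite_dl_bounded[OF assms] finite_subset by blast
qed

lemma coset_shift:
  assumes "g \<in> int_span S"
  shows "(\<lambda>w. (y + g) + w) ` int_span S = (\<lambda>w. y + w) ` int_span S"
proof
  show "(\<lambda>w. (y + g) + w) ` int_span S \<subseteq> (\<lambda>w. y + w) ` int_span S"
  proof
    fix v assume "v \<in> (\<lambda>w. (y + g) + w) ` int_span S"
    then obtain w where "w \<in> int_span S" "v = y + (g + w)" by (auto simp: add.assoc)
    then show "v \<in> (\<lambda>w. y + w) ` int_span S" using int_span_add[OF assms] by blast
  qed
  show "(\<lambda>w. y + w) ` int_span S \<subseteq> (\<lambda>w. (y + g) + w) ` int_span S"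
  proof
    fix v assume "v \<in> (\<lambda>w. y + w) ` int_span S"
    then obtain w where w: "w \<in> int_span S" "v = y + w" by auto
    then have "v = (y + g) + (w - g)" by simp
    then show "v \<in> (\<lambda>w. (y + g) + w) ` int_span S" using int_span_diff[OF w(1) assms] by blast
  qed
qed

lemma lattice_index_card:
  fixes G :: "(real^'n) set" and S :: "(real^'n) list"
  assumes G: "full_lattice G" and S: "goodl S" "set S \<subseteq> dual_lattice G"
  shows "lattice_index (dual_lattice G) S = card (acell (dual_lattice G) S t)"
proof -
  let ?L = "dual_lattice G"
  let ?A = "acell ?L S t"
  define F where "F y = (\<lambda>w. y + w) ` int_span S" for y :: "real^'n"
  have img: "F ` ?L = F ` ?A"
  proof
    show "F ` ?A \<subseteq> F ` ?L" by (auto simp: acell_def)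
    show "F ` ?L \<subseteq> F ` ?A"
    proof
      fix c assume "c \<in> F ` ?L"
      then obtain y where y: "y \<in> ?L" "c = F y" by auto
      define g where "g = (\<Sum>j<CARD('n). of_int (- floor (crd S (y + t) j)) *\<^sub>R S!j)"
      have g: "g \<in> int_span S" using S unfolding g_def goodl_def by (intro int_span_I[where k="\<lambda>j. - floor (crd S (y + t) j)"]) simp
      have cg: "crd S g j = of_int (- floor (crd S (y + t) j))" if "j < CARD('n)" for j
        using crd_unique[OF S(1) g_def[symmetric] that] .
      have a: "y + g \<in> ?A"
      proof -
        have "y + g \<in> ?L" using y(1) g int_span_sub_dl[OF S(2)] dl_add by blast
        moreover have "y + g + t \<in> cube S"
        proof (subst cube_crd[OF S(1)], intro allI impI)
          fix j assume j: "j < CARD('n)"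
          have "crd S (y + g + t) j = crd S (y + t) j + crd S g j"
            using crd_add[OF S(1) j] by (metis add.commute add.left_commute)
          then show "0 \<le> crd S (y + g + t) j \<and> crd S (y + g + t) j < 1" using cg[OF j]
            by (simp; linarith)
        qed
        ultimately show ?thesis by (simp add: acell_def)
      qed
      have "c = F (y + g)" unfolding y(2) F_def using coset_shift[OF g] by simp
      then show "c \<in> F ` ?A" using a by blast
    qed
  qed
  have inj: "inj_on F ?A"
  proof (rule inj_onI)
    fix a a' assume a: "a \<in> ?A" "a' \<in> ?A" "F a = F a'"
    have "a \<in> F a" unfolding F_def using int_span_0[of S] by force
    then have "a \<in> F a'" using a(3) by simp
    then obtain g where g: "g \<in> int_span S" "a = a' + g" by (auto simp: F_def)
    have "crd S g j = 0" if j: "j < CARD('n)" for j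
    proof -
      have "crd S (a + t) j = crd S (a' + t) j + crd S g j"
        using crd_add[OF S(1) j] g(2) by (metis add.commute add.left_commute)
      moreover have "0 \<le> crd S (a + t) j \<and> crd S (a + t) j < 1" "0 \<le> crd S (a' + t) j \<and> crd S (a' + t) j < 1"
        using a(1,2) cube_crd[OF S(1)] j by (auto simp: acell_def)
      moreover have "crd S g j \<in> \<int>" using crd_int_span[OF S(1) g(1) j] .
      ultimately have r: "crd S g j < 1" "crd S g j > -1" by linarith+
      obtain m where m: "crd S g j = of_int m" using \<open>crd S g j \<in> \<int>\<close> by (metis Ints_cases)
      have "m < 1" "-1 < m" using r unfolding m by simp_all
      then have "m = 0" by linarith
      then show ?thesis using m by simp
    qed
    then have "g = 0" using crd_sum[OF S(1), of g] by simp
    then show "a = a'" using g(2) by simp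
  qed
  have "lattice_index ?L S = card (F ` ?L)" unfolding lattice_index_def F_def by simp
  also have "\<dots> = card ?A" using img inj card_image by metis
  finally show ?thesis .
qed

lemma acell_nonempty:
  fixes G :: "(real^'n) set" and S :: "(real^'n) list"
  assumes G: "full_lattice G" and S: "goodl S" "set S \<subseteq> dual_lattice G"
  shows "card (acell (dual_lattice G) S t) > 0"
proof -
  let ?L = "dual_lattice G"
  define y :: "real^'n" where "y = 0"
  define g where "g = (\<Sum>j<CARD('n). of_int (- floor (crd S (y + t) j)) *\<^sub>R S!j)"
  have g: "g \<in> int_span S" using S unfolding g_def goodl_def by (intro int_span_I[where k="\<lambda>j. - floor (crd S (y + t) j)"]) simp
  have cg: "crd S g j = of_int (- floor (crd S (y + t) j))" if "j < CARD('n)" for j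
    using crd_unique[OF S(1) g_def[symmetric] that] .
  have "y + g \<in> ?L" using dl_0 g int_span_sub_dl[OF S(2)] dl_add y_def by blast
  moreover have "y + g + t \<in> cube S"
  proof (subst cube_crd[OF S(1)], intro allI impI)
    fix j assume j: "j < CARD('n)"
    have "crd S (y + g + t) j = crd S (y + t) j + crd S g j"
      using crd_add[OF S(1) j] by (metis add.commute add.left_commute)
    then show "0 \<le> crd S (y + g + t) j \<and> crd S (y + g + t) j < 1" using cg[OF j]
      by (simp; linarith)
  qed
  ultimately have "y + g \<in> acell ?L S t" by (simp add: acell_def)
  then show ?thesis using finite_acell[OF G] card_gt_0_iff by blast
qed


lemma dim_perp_one:
  fixes S :: "(real^'n) list"
  assumes S: "goodl S" and j: "j < CARD('n)"
  shows "dim {v. \<forall>x\<in>nth S ` ({..<CARD('n)} - {j}). x \<bullet> v = 0} = 1"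
proof -
  let ?W = "nth S ` ({..<CARD('n)} - {j})"
  have len: "length S = CARD('n)" and d: "distinct S" and ind: "independent (set S)"
    using S by (auto simp: goodl_def)
  have inj: "inj_on (nth S) ({..<CARD('n)} - {j})" using d len by (auto simp: inj_on_def nth_eq_iff_index_eq)
  have cardW: "card ?W = CARD('n) - 1" using card_image[OF inj] j by simp
  have Wsub: "?W \<subseteq> set S" using len by (auto simp: set_conv_nth)
  have indW: "independent ?W" using independent_mono[OF ind Wsub] .
  have "dim {y \<in> UNIV. \<forall>x \<in> span ?W. orthogonal x y} + dim (span ?W) = dim (UNIV :: (real^'n) set)"
    by (rule dim_subspace_orthogonal_to_vectors) auto
  moreover have "{y \<in> UNIV. \<forall>x \<in> span ?W. orthogonal x y} = {v. \<forall>x\<in>?W. x \<bullet> v = 0}"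
  proof (intro set_eqI iffI)
    fix v assume "v \<in> {y \<in> UNIV. \<forall>x \<in> span ?W. orthogonal x y}"
    then have a: "\<forall>x \<in> span ?W. x \<bullet> v = 0" by (simp add: orthogonal_def)
    show "v \<in> {v. \<forall>x\<in>?W. x \<bullet> v = 0}"
    proof (rule CollectI, rule ballI)
      fix x assume "x \<in> ?W"
      then have "x \<in> span ?W" by (rule span_base)
      then show "x \<bullet> v = 0" using a by blast
    qed
  next
    fix v assume a: "v \<in> {v. \<forall>x\<in>?W. x \<bullet> v = 0}"
    have "orthogonal v x" if "x \<in> span ?W" for x
      by (rule orthogonal_to_span[OF that]) (use a in \<open>auto simp: orthogonal_def inner_commute\<close>)
    then show "v \<in> {y \<in> UNIV. \<forall>x \<in> span ?W. orthogonal x y}" by (auto simp: orthogonal_commute)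
  qed
  moreover have "dim (span ?W) = CARD('n) - 1" using dim_eq_card_independent[OF indW] cardW by simp
  ultimately have "dim {v. \<forall>x\<in>?W. x \<bullet> v = 0} + (CARD('n) - 1) = CARD('n)" by simp
  then show ?thesis using j by arith
qed

lemma generic_crd:
  fixes S :: "(real^'n) list" and G :: "(real^'n) set"
  assumes S: "goodl S" "set S \<subseteq> dual_lattice G" "\<forall>x\<in>set S. {v. x \<bullet> v = 0} \<in> A"
    and t: "t \<in> chamber_set (dual_lattice G) A" and y: "y \<in> dual_lattice G" and j: "j < CARD('n)"
  shows "crd S (y + t) j \<notin> \<int>"
proof
  assume "crd S (y + t) j \<in> \<int>"
  then obtain m where m: "crd S (y + t) j = of_int m" by (metis Ints_cases)
  let ?W = "nth S ` ({..<CARD('n)} - {j})"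
  have len: "length S = CARD('n)" using S by (simp add: goodl_def)
  define L where "L = {v. \<forall>x\<in>?W. x \<bullet> v = 0}"
  define Hs where "Hs = (\<lambda>x. {v. x \<bullet> v = 0}) ` ?W"
  have HsA: "Hs \<subseteq> A" using S(3) len unfolding Hs_def by (auto simp: set_conv_nth)
  have LHs: "L = \<Inter>Hs" unfolding L_def Hs_def by auto
  have dimL: "dim L = 1" unfolding L_def by (rule dim_perp_one[OF S(1) j])
  define w where "w = (y + t) - of_int m *\<^sub>R S!j"
  have w_perp: "w \<bullet> v = 0" if "v \<in> L" for v
  proof -
    have "w = (\<Sum>k<CARD('n). crd S (y + t) k *\<^sub>R S!k) - of_int m *\<^sub>R S!j"
      unfolding w_def using crd_sum[OF S(1)] by simp
    also have "\<dots> = (\<Sum>k\<in>{..<CARD('n)} - {j}. crd S (y + t) k *\<^sub>R S!k)"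
      using j m by (simp add: sum.remove[of "{..<CARD('n)}" j])
    finally have "w \<bullet> v = (\<Sum>k\<in>{..<CARD('n)} - {j}. crd S (y + t) k * (S!k \<bullet> v))"
      by (simp add: inner_sum_left)
    also have "\<dots> = 0" using that unfolding L_def by (intro sum.neutral) auto
    finally show ?thesis .
  qed
  define l where "l = of_int m *\<^sub>R S!j - y"
  have l: "l \<in> dual_lattice G"
    unfolding l_def using S(2) j len y by (intro dl_diff dl_intmult) auto
  have "w \<in> dual_arr_union A"
    unfolding dual_arr_union_def using HsA LHs dimL w_perp by blast
  moreover have "t = l + w" unfolding l_def w_def by simp
  ultimately have "t \<in> (\<Union>l\<in>dual_lattice G. (\<lambda>y. l + y) ` dual_arr_union A)" using l by blast
  then show False using t unfolding chamber_set_def by blast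
qed

lemma acell_const:
  fixes S :: "(real^'n) list" and G :: "(real^'n) set"
  assumes S: "goodl S" "set S \<subseteq> dual_lattice G" "\<forall>x\<in>set S. {v. x \<bullet> v = 0} \<in> A"
    and D: "D \<in> components (chamber_set (dual_lattice G) A)" and t: "t \<in> D" "t' \<in> D"
  shows "acell (dual_lattice G) S t = acell (dual_lattice G) S t'"
proof -
  have Dsub: "D \<subseteq> chamber_set (dual_lattice G) A" using in_components_subset[OF D] .
  have conn: "connected D" using in_components_connected[OF D] .
  have key: "y + t \<in> cube S \<longleftrightarrow> y + t' \<in> cube S" if y: "y \<in> dual_lattice G" for y
  proof -
    define T where "T = {u \<in> D. y + u \<in> cube S}"
    have gen: "crd S y j + crd S u j \<noteq> 0 \<and> crd S y j + crd S u j \<noteq> 1" if "u \<in> D" "j < CARD('n)" for u j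
    proof -
      have "crd S (y + u) j \<notin> \<int>" using generic_crd[OF S _ y that(2)] Dsub that(1) by blast
      then show ?thesis using crd_add[OF S(1) that(2)] by (metis Ints_0 Ints_1)
    qed
    have cont: "continuous_on UNIV (\<lambda>u. crd S y j + crd S u j)" if "j < CARD('n)" for j
      by (intro continuous_intros continuous_crd[OF S(1) that])
    have T1: "T = D \<inter> (\<Inter>j\<in>{..<CARD('n)}. {u. 0 < crd S y j + crd S u j} \<inter> {u. crd S y j + crd S u j < 1})"
      unfolding T_def using gen by (auto simp: cube_crd[OF S(1)] crd_add[OF S(1)] order_le_less)
    have T2: "T = D \<inter> (\<Inter>j\<in>{..<CARD('n)}. {u. 0 \<le> crd S y j + crd S u j} \<inter> {u. crd S y j + crd S u j \<le> 1})"
      unfolding T_def using gen by (auto simp: cube_crd[OF S(1)] crd_add[OF S(1)] order_le_less)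
    have "openin (top_of_set D) T" unfolding T1
      by (intro openin_open_Int open_INT ballI open_Int open_Collect_less cont continuous_intros) auto
    moreover have "closedin (top_of_set D) T" unfolding T2
      by (intro closedin_closed_Int closed_INT ballI closed_Int closed_Collect_le cont continuous_intros) auto
    ultimately have "T = {} \<or> T = D" using conn connected_clopen by blast
    then show ?thesis using t unfolding T_def by blast
  qed
  show ?thesis unfolding acell_def using key by blast
qed


lemma cpair_add: "cpair (a + b) z = cpair a z + cpair b z"
  by (simp add: cpair_def sum.distrib distrib_right)
lemma cpair_scale: "cpair (r *\<^sub>R a) z = complex_of_real r * cpair a z"
  by (simp add: cpair_def sum_distrib_left mult.assoc)
lemma cpair_uminus: "cpair (- a) z = - cpair a z"
  by (simp add: cpair_def sum_negf)
lemma cpair_diff: "cpair (a - b) z = cpair a z - cpair b z"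
  by (simp add: cpair_def sum_subtractf left_diff_distrib)

lemma idx_bij: "bij_betw (idx :: 'n::finite \<Rightarrow> nat) UNIV {..<CARD('n)}"
proof -
  have "\<exists>h. bij_betw h (UNIV :: 'n set) {0..<card (UNIV :: 'n set)}"
    by (rule ex_bij_betw_finite_nat) simp
  then have "\<exists>h. bij_betw h (UNIV :: 'n set) {..<CARD('n)}" by (simp add: atLeast0LessThan)
  then show ?thesis unfolding idx_def by (rule someI_ex)
qed

lemma idx_lt: "idx (r::'n::finite) < CARD('n)"
  using idx_bij bij_betwE by blast

lemma idx_inj: "idx (r::'n::finite) = idx s \<longleftrightarrow> r = s"
  using idx_bij by (auto simp: bij_betw_def inj_def)

lemma idx_surj: "j < CARD('n) \<Longrightarrow> \<exists>r::'n::finite. idx r = j"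
proof -
  assume j: "j < CARD('n)"
  have "bij_betw (idx::'n \<Rightarrow> nat) UNIV {..<CARD('n)}" by (rule idx_bij)
  then show ?thesis using j by (metis bij_betw_def imageE lessThan_iff)
qed

lemma list_det_upd:
  fixes S :: "(real^'n::finite) list"
  assumes "length S = CARD('n)" "idx k = j"
  shows "list_det (S[j := v]) = det (\<chi> r. if r = k then v else S ! idx r)"
proof -
  have "(\<chi> r. S[j := v] ! idx r) = (\<chi> r. if r = k then v else S ! idx r)"
    using assms idx_lt[of k] by (auto simp: vec_eq_iff nth_list_update idx_inj)
  then show ?thesis by (simp add: list_det_def)
qed

lemma list_det_scale:
  fixes S :: "(real^'n::finite) list"
  assumes "length S = CARD('n)" "j < CARD('n)"
  shows "list_det (S[j := c *\<^sub>R S!j]) = c * list_det S"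
proof -
  obtain k :: 'n where k: "idx k = j" using idx_surj[OF assms(2)] by blast
  have "list_det (S[j := c *\<^sub>R S!j]) = det (\<chi> r. if r = k then c *s (S ! idx r) else S ! idx r)"
  proof -
    have "(\<chi> r. if r = k then c *\<^sub>R S!j else S!idx r) = (\<chi> r. if r = k then c *s (S ! idx r) else S ! idx r)"
      by (auto simp: vec_eq_iff k scalar_mult_eq_scaleR)
    then show ?thesis using list_det_upd[OF assms(1) k] by simp
  qed
  also have "\<dots> = c * det (\<chi> r. if r = k then S ! idx r else S ! idx r)" by (rule det_row_mul)
  finally show ?thesis by (simp add: list_det_def)
qed

lemma goodl_I:
  fixes T :: "(real^'n) list"
  assumes len: "length T = CARD('n)"
    and z: "\<And>l. (\<Sum>k<CARD('n). l k *\<^sub>R T!k) = 0 \<Longrightarrow> \<forall>k<CARD('n). l k = 0"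
  shows "goodl T"
proof -
  have d: "distinct T"
  proof (rule ccontr)
    assume "\<not> distinct T"
    then obtain a b where ab: "a < length T" "b < length T" "a \<noteq> b" "T!a = T!b"
      by (auto simp: distinct_conv_nth)
    define l where "l k = (if k = a then 1 else if k = b then -1 else 0 :: real)" for k
    have "(\<Sum>k<CARD('n). l k *\<^sub>R T!k) = (\<Sum>k<CARD('n). (if k = a then T!a else 0) - (if k = b then T!b else 0))"
      by (rule sum.cong) (auto simp: l_def ab)
    also have "\<dots> = 0" using ab len by (simp add: sum_subtractf)
    finally have "l a = 0" using z ab len by auto
    then show False by (simp add: l_def)
  qed
  have "independent (set T)"
    unfolding independent_explicit
  proof (intro conjI allI impI ballI)
    show "finite (set T)" by simp
    fix c v assume c: "(\<Sum>v\<in>set T. c v *\<^sub>R v) = 0" and v: "v \<in> set T"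
    have "(\<Sum>k<CARD('n). c (T!k) *\<^sub>R T!k) = 0" using sum_nth_set[OF d, of "\<lambda>v. c v *\<^sub>R v"] c len by simp
    then have "\<forall>k<CARD('n). c (T!k) = 0" by (rule z)
    then show "c v = 0" using v len by (auto simp: set_conv_nth)
  qed
  then show ?thesis using d len by (simp add: goodl_def)
qed

lemma goodl_par:
  fixes S T :: "(real^'n) list"
  assumes S: "goodl S" and len: "length T = CARD('n)"
    and par: "\<And>k. k < CARD('n) \<Longrightarrow> \<exists>c. c \<noteq> 0 \<and> T!k = c *\<^sub>R S!k"
  shows "goodl T"
proof (rule goodl_I[OF len])
  obtain c where c: "\<And>k. k < CARD('n) \<Longrightarrow> c k \<noteq> 0 \<and> T!k = c k *\<^sub>R S!k" using par by metis
  fix l assume "(\<Sum>k<CARD('n). l k *\<^sub>R T!k) = 0"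
  moreover have "(\<Sum>k<CARD('n). l k *\<^sub>R T!k) = (\<Sum>k<CARD('n). (l k * c k) *\<^sub>R S!k)"
    by (rule sum.cong) (auto simp: c)
  ultimately have "(\<Sum>k<CARD('n). (l k * c k) *\<^sub>R S!k) = 0" by simp
  then have "\<forall>k<CARD('n). l k * c k = 0" using goodl_lincomb_zero[OF S, of "\<lambda>k. l k * c k"] by blast
  then show "\<forall>k<CARD('n). l k = 0" using c by auto
qed

lemma goodl_upd_scale:
  fixes S :: "(real^'n) list"
  assumes "goodl S" "j < CARD('n)" "c \<noteq> 0"
  shows "goodl (S[j := c *\<^sub>R S!j])"
proof (rule goodl_par[OF assms(1)])
  show "length (S[j := c *\<^sub>R S!j]) = CARD('n)" using assms by (simp add: goodl_def)
next
  fix k assume k: "k < CARD('n)"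
  show "\<exists>c'. c' \<noteq> 0 \<and> S[j := c *\<^sub>R S!j]!k = c' *\<^sub>R S!k"
  proof (cases "k = j")
    case True then show ?thesis using assms by (intro exI[of _ c]) (simp add: goodl_def)
  next
    case False then show ?thesis by (intro exI[of _ 1]) simp
  qed
qed

lemma crd_upd_scale:
  fixes S :: "(real^'n) list"
  assumes S: "goodl S" and j: "j < CARD('n)" and c: "c \<noteq> 0" and k: "k < CARD('n)"
  shows "crd (S[j := c *\<^sub>R S!j]) v k = (if k = j then crd S v j / c else crd S v k)"
proof (rule crd_unique[OF goodl_upd_scale[OF S j c] _ k])
  have len: "length S = CARD('n)" using S by (simp add: goodl_def)
  have "(\<Sum>k<CARD('n). (if k = j then crd S v j / c else crd S v k) *\<^sub>R S[j := c *\<^sub>R S!j] ! k)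
      = (\<Sum>k<CARD('n). crd S v k *\<^sub>R S!k)"
    by (rule sum.cong) (use c len in \<open>auto simp: nth_list_update\<close>)
  then show "(\<Sum>k<CARD('n). (if k = j then crd S v j / c else crd S v k) *\<^sub>R S[j := c *\<^sub>R S!j] ! k) = v"
    using crd_sum[OF S] by simp
qed

definition goodA :: "(real^'n) set \<Rightarrow> (real^'n) set set \<Rightarrow> (real^'n) list \<Rightarrow> bool" where
  "goodA L A S \<longleftrightarrow> goodl S \<and> set S \<subseteq> L \<and> (\<forall>x\<in>set S. {v. x \<bullet> v = 0} \<in> A)"

lemma goodA_upd:
  fixes S :: "(real^'n) list"
  assumes a: "goodA L A S" and j: "j < CARD('n)" and c: "c \<noteq> 0" and cL: "c *\<^sub>R S!j \<in> L"
  shows "goodA L A (S[j := c *\<^sub>R S!j])"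
proof -
  have len: "length S = CARD('n)" using a by (simp add: goodA_def goodl_def)
  have hyp: "{v. (c *\<^sub>R S!j) \<bullet> v = 0} = {v. S!j \<bullet> v = 0}" using c by simp
  have Sj: "S!j \<in> set S" using len j by simp
  have sub: "set (S[j := c *\<^sub>R S!j]) \<subseteq> insert (c *\<^sub>R S!j) (set S)" by (rule set_update_subset_insert)
  have g: "goodl (S[j := c *\<^sub>R S!j])" using a goodl_upd_scale[OF _ j c] by (simp add: goodA_def)
  have SL: "set S \<subseteq> L" and SA: "\<forall>x\<in>set S. {v. x \<bullet> v = 0} \<in> A" using a by (simp_all add: goodA_def)
  have "set (S[j := c *\<^sub>R S!j]) \<subseteq> L" using sub SL cL by blast
  moreover have "\<forall>x\<in>set (S[j := c *\<^sub>R S!j]). {v. x \<bullet> v = 0} \<in> A"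
  proof
    fix x assume "x \<in> set (S[j := c *\<^sub>R S!j])"
    then have "x = c *\<^sub>R S!j \<or> x \<in> set S" using sub by blast
    then show "{v. x \<bullet> v = 0} \<in> A"
    proof
      assume "x = c *\<^sub>R S!j" then show ?thesis using hyp SA Sj by simp
    qed (use SA in blast)
  qed
  ultimately show ?thesis using g by (simp add: goodA_def)
qed


lemma crd_shift:
  fixes S :: "(real^'n) list"
  assumes S: "goodl S" and j: "j < CARD('n)" and k: "k < CARD('n)"
  shows "crd S (v + r *\<^sub>R S!j) k = crd S v k + (if k = j then r else 0)"
  using crd_add[OF S k, of v "r *\<^sub>R S!j"] crd_scale[OF S k, of r "S!j"] crd_nth[OF S k j] by simp

lemma acell_mu_eq: "{y \<in> L. y + t \<in> cube xs} = acell L xs t" by (simp add: acell_def)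

lemma acell_posmult_bij:
  fixes S :: "(real^'n) list" and G :: "(real^'n) set"
  assumes S: "goodl S" "set S \<subseteq> dual_lattice G" and j: "j < CARD('n)" and m: "m > 0"
  shows "bij_betw (\<lambda>(y, q). y + real q *\<^sub>R S!j) (acell (dual_lattice G) S t \<times> {..<m})
           (acell (dual_lattice G) (S[j := real m *\<^sub>R S!j]) t)"
proof -
  let ?L = "dual_lattice G"
  let ?S' = "S[j := real m *\<^sub>R S!j]"
  have mne: "real m \<noteq> 0" using m by simp
  have g': "goodl ?S'" by (rule goodl_upd_scale[OF S(1) j mne])
  have len: "length S = CARD('n)" using S by (simp add: goodl_def)
  have xL: "S!j \<in> ?L" using S(2) len j by auto
  have crd': "crd ?S' v k = (if k = j then crd S v j / real m else crd S v k)" if "k < CARD('n)" for v k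
    by (rule crd_upd_scale[OF S(1) j mne that])
  have sh: "crd S (y + real q *\<^sub>R S!j + t) k = crd S (y + t) k + (if k = j then real q else 0)"
    if "k < CARD('n)" for y q k
    using crd_shift[OF S(1) j that, of "y + t" "real q"] by (simp add: algebra_simps)
  have mem: "y \<in> acell ?L S t \<longleftrightarrow> y \<in> ?L \<and> (\<forall>k<CARD('n). 0 \<le> crd S (y + t) k \<and> crd S (y + t) k < 1)" for y
    by (simp add: acell_def cube_crd[OF S(1)])
  have mem': "y \<in> acell ?L ?S' t \<longleftrightarrow> y \<in> ?L \<and> (\<forall>k<CARD('n). 0 \<le> crd ?S' (y + t) k \<and> crd ?S' (y + t) k < 1)" for y
    by (simp add: acell_def cube_crd[OF g'])
  show ?thesis
  proof (rule bij_betw_imageI)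
    show "inj_on (\<lambda>(y, q). y + real q *\<^sub>R S!j) (acell ?L S t \<times> {..<m})"
    proof (rule inj_onI, clarify)
      fix y q y' q' assume a: "y \<in> acell ?L S t" "q < m" "y' \<in> acell ?L S t" "q' < m"
        "y + real q *\<^sub>R S!j = y' + real q' *\<^sub>R S!j"
      have "crd S (y + real q *\<^sub>R S!j + t) j = crd S (y' + real q' *\<^sub>R S!j + t) j" using a(5) by simp
      then have e: "crd S (y + t) j + real q = crd S (y' + t) j + real q'" using sh[OF j] by simp
      have "0 \<le> crd S (y + t) j" "crd S (y + t) j < 1" "0 \<le> crd S (y' + t) j" "crd S (y' + t) j < 1"
        using a(1,3) mem j by blast+
      then have "real q < real q' + 1" "real q' < real q + 1" using e by linarith+
      then have "q = q'" by linarith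
      then show "y = y' \<and> q = q'" using a(5) by simp
    qed
    show "(\<lambda>(y, q). y + real q *\<^sub>R S!j) ` (acell ?L S t \<times> {..<m}) = acell ?L ?S' t"
    proof (intro set_eqI iffI)
      fix w assume "w \<in> (\<lambda>(y, q). y + real q *\<^sub>R S!j) ` (acell ?L S t \<times> {..<m})"
      then obtain y q where yq: "y \<in> acell ?L S t" "q < m" "w = y + real q *\<^sub>R S!j" by auto
      have yL: "y \<in> ?L" and yc: "\<forall>k<CARD('n). 0 \<le> crd S (y + t) k \<and> crd S (y + t) k < 1" using yq(1) mem by auto
      have "w \<in> ?L" unfolding yq(3) using yL xL dl_add dl_intmult[of "S!j" G "int q"] by simp
      moreover have "\<forall>k<CARD('n). 0 \<le> crd ?S' (w + t) k \<and> crd ?S' (w + t) k < 1"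
      proof (intro allI impI)
        fix k assume k: "k < CARD('n)"
        show "0 \<le> crd ?S' (w + t) k \<and> crd ?S' (w + t) k < 1"
        proof (cases "k = j")
          case True
          have e: "crd ?S' (w + t) k = (crd S (y + t) j + real q) / real m" using crd'[OF k] sh[OF j] True yq(3) by simp
          have a: "0 \<le> crd S (y + t) j" "crd S (y + t) j < 1" using yc j by auto
          have b: "real q + 1 \<le> real m" using yq(2) by simp
          have "0 \<le> (crd S (y + t) j + real q) / real m" using a by simp
          moreover have "(crd S (y + t) j + real q) / real m < 1" using a b m by (simp add: divide_less_eq)
          ultimately show ?thesis using e by simp
        next
          case False
          then show ?thesis using crd'[OF k] sh[OF k] yq(3) yc k by simp
        qed
      qed
      ultimately show "w \<in> acell ?L ?S' t" using mem' by blast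
    next
      fix w assume w: "w \<in> acell ?L ?S' t"
      have wL: "w \<in> ?L" and wc: "\<forall>k<CARD('n). 0 \<le> crd ?S' (w + t) k \<and> crd ?S' (w + t) k < 1" using w mem' by auto
      define c where "c = crd S (w + t) j"
      have "0 \<le> c / real m" "c / real m < 1" using wc j crd'[OF j] unfolding c_def by auto
      then have c: "0 \<le> c" "c < real m" using m by (simp_all add: divide_simps)
      define q where "q = nat (floor c)"
      have q: "real q \<le> c" "c < real q + 1" using c unfolding q_def by linarith+
      have qm: "q < m" using q c by linarith
      define y where "y = w + (- real q) *\<^sub>R S!j"
      have yL: "y \<in> ?L" unfolding y_def using dl_add[OF wL dl_intmult[OF xL, of "- int q"]] by simp
      have ycr: "crd S (y + t) k = crd S (w + t) k + (if k = j then - real q else 0)" if "k < CARD('n)" for k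
        using crd_shift[OF S(1) j that, of "w + t" "- real q"] unfolding y_def by (simp add: algebra_simps)
      have "\<forall>k<CARD('n). 0 \<le> crd S (y + t) k \<and> crd S (y + t) k < 1"
      proof (intro allI impI)
        fix k assume k: "k < CARD('n)"
        show "0 \<le> crd S (y + t) k \<and> crd S (y + t) k < 1"
        proof (cases "k = j")
          case True then show ?thesis using ycr[OF k] q unfolding c_def by simp
        next
          case False
          have "0 \<le> crd ?S' (w + t) k \<and> crd ?S' (w + t) k < 1" using wc k by blast
          then show ?thesis using ycr[OF k] crd'[OF k] False by simp
        qed
      qed
      then have "y \<in> acell ?L S t" using yL mem by blast
      moreover have "w = y + real q *\<^sub>R S!j" unfolding y_def by (simp add: algebra_simps)
      ultimately show "w \<in> (\<lambda>(y, q). y + real q *\<^sub>R S!j) ` (acell ?L S t \<times> {..<m})"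
        using qm by force
    qed
  qed
qed

lemma mu_coef_split:
  fixes S :: "(real^'n) list"
  assumes len: "length S = CARD('n)" and j: "j < CARD('n)"
  shows "mu_coef L S t z = (1 / of_nat (lattice_index L S)) * complex_of_real (list_det S) *
     (1 / (1 - exp (cpair (S!j) z))) * (\<Prod>k\<in>{..<CARD('n)} - {j}. 1 / (1 - exp (cpair (S!k) z))) *
     (\<Sum>y\<in>acell L S t. exp (cpair y z))"
proof -
  have "(\<Prod>k<length S. 1 / (1 - exp (cpair (S!k) z))) =
     (1 / (1 - exp (cpair (S!j) z))) * (\<Prod>k\<in>{..<CARD('n)} - {j}. 1 / (1 - exp (cpair (S!k) z)))"
    using len j by (simp add: prod.remove[of "{..<CARD('n)}" j])
  then show ?thesis unfolding mu_coef_def acell_mu_eq by simp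
qed

lemma prod_rest_upd:
  fixes S :: "(real^'n) list"
  shows "(\<Prod>k\<in>{..<CARD('n)} - {j}. f (S[j := v] ! k)) = (\<Prod>k\<in>{..<CARD('n)} - {j}. f (S!k))"
  by (rule prod.cong) auto

lemma exp_cpair_scale_nat: "exp (cpair (real q *\<^sub>R x) z) = exp (cpair x z) ^ q"
proof -
  have "cpair (real q *\<^sub>R x) z = of_nat q * cpair x z" by (simp add: cpair_scale)
  then show ?thesis by (simp add: exp_of_nat_mult)
qed

lemma mu_posmult:
  fixes S :: "(real^'n) list" and G :: "(real^'n) set"
  assumes G: "full_lattice G" and S: "goodl S" "set S \<subseteq> dual_lattice G" and j: "j < CARD('n)" and m: "m > 0"
    and E: "exp (cpair (real m *\<^sub>R S!j) z) \<noteq> 1"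
  shows "mu_coef (dual_lattice G) (S[j := real m *\<^sub>R S!j]) t z = mu_coef (dual_lattice G) S t z"
proof -
  let ?L = "dual_lattice G"
  let ?S' = "S[j := real m *\<^sub>R S!j]"
  have mne: "real m \<noteq> 0" using m by simp
  have g': "goodl ?S'" by (rule goodl_upd_scale[OF S(1) j mne])
  have len: "length S = CARD('n)" using S by (simp add: goodl_def)
  have xL: "S!j \<in> ?L" using S(2) len j by auto
  have mxL: "real m *\<^sub>R S!j \<in> ?L" using dl_intmult[OF xL, of "int m"] by simp
  have S'L: "set ?S' \<subseteq> ?L" using set_update_subset_insert[of S j "real m *\<^sub>R S!j"] S(2) mxL by blast
  have bij: "bij_betw (\<lambda>(y, q). y + real q *\<^sub>R S!j) (acell ?L S t \<times> {..<m}) (acell ?L ?S' t)"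
    by (rule acell_posmult_bij[OF S j m])
  have fin: "finite (acell ?L S t)" by (rule finite_acell[OF G])
  define V where "V = card (acell ?L S t)"
  define N where "N = (\<Sum>y\<in>acell ?L S t. exp (cpair y z))"
  define E1 where "E1 = exp (cpair (S!j) z)"
  define Q where "Q = (\<Sum>q<m. E1 ^ q)"
  define R where "R = (\<Prod>k\<in>{..<CARD('n)} - {j}. 1 / (1 - exp (cpair (S!k) z)))"
  have V': "lattice_index ?L ?S' = V * m"
  proof -
    have "lattice_index ?L ?S' = card (acell ?L ?S' t)" by (rule lattice_index_card[OF G g' S'L])
    also have "\<dots> = card (acell ?L S t \<times> {..<m})" using bij_betw_same_card[OF bij] by simp
    also have "\<dots> = V * m" by (simp add: V_def card_cartesian_product)
    finally show ?thesis .
  qed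
  have V0: "lattice_index ?L S = V" unfolding V_def by (rule lattice_index_card[OF G S])
  have N': "(\<Sum>y\<in>acell ?L ?S' t. exp (cpair y z)) = N * Q"
  proof -
    have "(\<Sum>y\<in>acell ?L ?S' t. exp (cpair y z)) =
        (\<Sum>p\<in>acell ?L S t \<times> {..<m}. exp (cpair ((\<lambda>(y, q). y + real q *\<^sub>R S!j) p) z))"
      using sum.reindex_bij_betw[OF bij, of "\<lambda>y. exp (cpair y z)"] by simp
    also have "\<dots> = (\<Sum>(y, q)\<in>acell ?L S t \<times> {..<m}. exp (cpair y z) * E1 ^ q)"
      by (rule sum.cong) (auto simp: cpair_add exp_add exp_cpair_scale_nat E1_def)
    also have "\<dots> = (\<Sum>y\<in>acell ?L S t. \<Sum>q<m. exp (cpair y z) * E1 ^ q)"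
      by (rule sum.cartesian_product[symmetric])
    also have "\<dots> = N * Q" by (simp only: N_def Q_def sum_product)
    finally show ?thesis .
  qed
  have D': "list_det ?S' = real m * list_det S" by (rule list_det_scale[OF len j])
  have Em: "exp (cpair (real m *\<^sub>R S!j) z) = E1 ^ m" unfolding E1_def by (rule exp_cpair_scale_nat)
  have fac: "1 - E1 ^ m = (1 - E1) * Q" unfolding Q_def by (rule one_diff_power_eq)
  have nz: "1 - E1 ^ m \<noteq> 0" using E Em by simp
  then have Q0: "Q \<noteq> 0" and E10: "1 - E1 \<noteq> 0" using fac by auto
  have Vpos: "V > 0" unfolding V_def by (rule acell_nonempty[OF G S])
  have "mu_coef ?L ?S' t z = (1 / of_nat (V * m)) * complex_of_real (real m * list_det S) *
     (1 / (1 - E1 ^ m)) * R * (N * Q)"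
    unfolding mu_coef_split[OF length_list_update[THEN trans, OF len] j] V' D' N' R_def prod_rest_upd
    using Em len j by simp
  also have "\<dots> = (1 / of_nat V) * complex_of_real (list_det S) * (1 / (1 - E1)) * R * N"
    using Q0 E10 Vpos m unfolding fac by (simp add: field_simps)
  also have "\<dots> = mu_coef ?L S t z"
    unfolding mu_coef_split[OF len j] V0 R_def N_def E1_def by simp
  finally show ?thesis .
qed

lemma mu_neg:
  fixes S :: "(real^'n) list" and G :: "(real^'n) set"
  assumes G: "full_lattice G" and S: "goodA (dual_lattice G) A S" and j: "j < CARD('n)"
    and t: "t \<in> chamber_set (dual_lattice G) A"
    and E: "exp (cpair (S!j) z) \<noteq> 1"
  shows "mu_coef (dual_lattice G) (S[j := (-1) *\<^sub>R S!j]) t z = mu_coef (dual_lattice G) S t z"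
proof -
  let ?L = "dual_lattice G"
  let ?S' = "S[j := (-1) *\<^sub>R S!j]"
  let ?x = "S!j"
  have gS: "goodl S" and SL: "set S \<subseteq> ?L" using S by (auto simp: goodA_def)
  have len: "length S = CARD('n)" using gS by (simp add: goodl_def)
  have xL: "?x \<in> ?L" using SL len j by auto
  have nxL: "(-1) *\<^sub>R ?x \<in> ?L" using dl_uminus[OF xL] by simp
  have S': "goodA ?L A ?S'" by (rule goodA_upd[OF S j _ nxL]) simp
  have gS': "goodl ?S'" and S'L: "set ?S' \<subseteq> ?L" using S' by (auto simp: goodA_def)
  have crd': "crd ?S' v k = (if k = j then - crd S v j else crd S v k)" if "k < CARD('n)" for v k
    using crd_upd_scale[OF gS j _ that, of "-1" v] by simp
  have sh: "crd S (y + r *\<^sub>R ?x + t) k = crd S (y + t) k + (if k = j then r else 0)"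
    if "k < CARD('n)" for y r k
    using crd_shift[OF gS j that, of "y + t" r] by (simp add: algebra_simps)
  have mem: "y \<in> acell ?L S t \<longleftrightarrow> y \<in> ?L \<and> (\<forall>k<CARD('n). 0 \<le> crd S (y + t) k \<and> crd S (y + t) k < 1)" for y
    by (simp add: acell_def cube_crd[OF gS])
  have mem': "y \<in> acell ?L ?S' t \<longleftrightarrow> y \<in> ?L \<and> (\<forall>k<CARD('n). 0 \<le> crd ?S' (y + t) k \<and> crd ?S' (y + t) k < 1)" for y
    unfolding acell_def mem_Collect_eq cube_crd[OF gS'] by (rule refl)
  have gen: "crd S (y + t) j \<noteq> 0" if "y \<in> ?L" for y
    using generic_crd[of S G A t y j] S t that j unfolding goodA_def by (metis Ints_0)
  have gen': "crd ?S' (y + t) j \<noteq> 0" if "y \<in> ?L" for y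
    using generic_crd[of ?S' G A t y j] S' t that j unfolding goodA_def by (metis Ints_0)
  have bij: "bij_betw (\<lambda>y. y + (-1) *\<^sub>R ?x) (acell ?L S t) (acell ?L ?S' t)"
  proof (rule bij_betw_byWitness[where f'="\<lambda>y. y + 1 *\<^sub>R ?x"])
    show "\<forall>a\<in>acell ?L S t. a + (-1) *\<^sub>R ?x + 1 *\<^sub>R ?x = a" by simp
    show "\<forall>a\<in>acell ?L ?S' t. a + 1 *\<^sub>R ?x + (-1) *\<^sub>R ?x = a" by simp
    show "(\<lambda>y. y + (-1) *\<^sub>R ?x) ` acell ?L S t \<subseteq> acell ?L ?S' t"
    proof clarify
      fix y assume y: "y \<in> acell ?L S t"
      have yL: "y \<in> ?L" and yc: "\<forall>k<CARD('n). 0 \<le> crd S (y + t) k \<and> crd S (y + t) k < 1" using y mem by auto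
      have "y + (-1) *\<^sub>R ?x \<in> ?L" using dl_add[OF yL nxL] .
      moreover have "\<forall>k<CARD('n). 0 \<le> crd ?S' (y + (-1) *\<^sub>R ?x + t) k \<and> crd ?S' (y + (-1) *\<^sub>R ?x + t) k < 1"
      proof (intro allI impI)
        fix k assume k: "k < CARD('n)"
        show "0 \<le> crd ?S' (y + (-1) *\<^sub>R ?x + t) k \<and> crd ?S' (y + (-1) *\<^sub>R ?x + t) k < 1"
        proof (cases "k = j")
          case True
          have "0 \<le> crd S (y + t) j" "crd S (y + t) j < 1" "crd S (y + t) j \<noteq> 0" using yc j gen[OF yL] by auto
          then show ?thesis using crd'[OF k] sh[OF k, of y "-1"] True by simp
        next
          case False
          have "0 \<le> crd S (y + t) k \<and> crd S (y + t) k < 1" using yc k by blast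
          then show ?thesis using crd'[OF k] sh[OF k, of y "-1"] False by simp
        qed
      qed
      ultimately show "y + (-1) *\<^sub>R ?x \<in> acell ?L ?S' t" using mem' by blast
    qed
    show "(\<lambda>y. y + 1 *\<^sub>R ?x) ` acell ?L ?S' t \<subseteq> acell ?L S t"
    proof clarify
      fix y assume y: "y \<in> acell ?L ?S' t"
      have yL: "y \<in> ?L" and yc: "\<forall>k<CARD('n). 0 \<le> crd ?S' (y + t) k \<and> crd ?S' (y + t) k < 1" using y mem' by auto
      have "y + 1 *\<^sub>R ?x \<in> ?L" using dl_add[OF yL xL] by simp
      moreover have "\<forall>k<CARD('n). 0 \<le> crd S (y + 1 *\<^sub>R ?x + t) k \<and> crd S (y + 1 *\<^sub>R ?x + t) k < 1"
      proof (intro allI impI)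
        fix k assume k: "k < CARD('n)"
        have c: "0 \<le> crd ?S' (y + t) k \<and> crd ?S' (y + t) k < 1" using yc k by blast
        show "0 \<le> crd S (y + 1 *\<^sub>R ?x + t) k \<and> crd S (y + 1 *\<^sub>R ?x + t) k < 1"
        proof (cases "k = j")
          case True
          have "crd ?S' (y + t) j \<noteq> 0" using gen'[OF yL] .
          then show ?thesis using c crd'[OF k] sh[OF k, of y 1] True by simp
        next
          case False
          then show ?thesis using c crd'[OF k] sh[OF k, of y 1] by simp
        qed
      qed
      ultimately show "y + 1 *\<^sub>R ?x \<in> acell ?L S t" using mem by blast
    qed
  qed
  define V where "V = card (acell ?L S t)"
  define N where "N = (\<Sum>y\<in>acell ?L S t. exp (cpair y z))"
  define E1 where "E1 = exp (cpair ?x z)"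
  define R where "R = (\<Prod>k\<in>{..<CARD('n)} - {j}. 1 / (1 - exp (cpair (S!k) z)))"
  have V0: "lattice_index ?L S = V" unfolding V_def by (rule lattice_index_card[OF G gS SL])
  have V': "lattice_index ?L ?S' = V"
    unfolding V_def lattice_index_card[OF G gS' S'L, of t] using bij_betw_same_card[OF bij] by simp
  have N': "(\<Sum>y\<in>acell ?L ?S' t. exp (cpair y z)) = N / E1"
  proof -
    have "(\<Sum>y\<in>acell ?L ?S' t. exp (cpair y z)) = (\<Sum>y\<in>acell ?L S t. exp (cpair (y + (-1) *\<^sub>R ?x) z))"
      using sum.reindex_bij_betw[OF bij, of "\<lambda>y. exp (cpair y z)"] by simp
    also have "\<dots> = (\<Sum>y\<in>acell ?L S t. exp (cpair y z) / E1)"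
    proof (rule sum.cong)
      fix y show "exp (cpair (y + (-1) *\<^sub>R ?x) z) = exp (cpair y z) / E1"
        unfolding E1_def cpair_add cpair_scale by (simp add: exp_diff)
    qed simp
    also have "\<dots> = N / E1" by (simp add: N_def sum_divide_distrib)
    finally show ?thesis .
  qed
  have D': "list_det ?S' = - list_det S" using list_det_scale[OF len j, of "-1"] by simp
  have Em: "exp (cpair ((-1) *\<^sub>R ?x) z) = inverse E1" unfolding E1_def cpair_scale by (simp add: exp_minus)
  have E0: "E1 \<noteq> 0" unfolding E1_def by simp
  have E10: "E1 \<noteq> 1" using E unfolding E1_def .
  have "mu_coef ?L ?S' t z = (1 / of_nat V) * complex_of_real (- list_det S) *
     (1 / (1 - inverse E1)) * R * (N / E1)"
    unfolding mu_coef_split[OF length_list_update[THEN trans, OF len] j] V' D' N' R_def prod_rest_upd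
    using Em len j by simp
  also have "\<dots> = (1 / of_nat V) * complex_of_real (list_det S) * (1 / (1 - E1)) * R * N"
  proof -
    have "1 - inverse E1 \<noteq> 0" using E0 E10 by (simp add: field_simps)
    moreover have "1 - E1 \<noteq> 0" using E10 by simp
    moreover have "V > 0" unfolding V_def by (rule acell_nonempty[OF G gS SL])
    ultimately show ?thesis using E0 by (simp add: field_simps)
  qed
  also have "\<dots> = mu_coef ?L S t z"
    unfolding mu_coef_split[OF len j] V0 R_def N_def E1_def by simp
  finally show ?thesis .
qed


lemma exp_int_mult_one:
  fixes w :: complex
  assumes "exp w = 1" shows "exp (of_int q * w) = 1"
proof (cases "q \<ge> 0")
  case True
  then have "of_int q = (of_nat (nat q) :: complex)" by simp
  then show ?thesis using assms by (simp add: exp_of_nat_mult)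
next
  case False
  then have "of_int q = - (of_nat (nat (- q)) :: complex)" by simp
  then have "exp (of_int q * w) = inverse (exp (of_nat (nat (- q)) * w))" by (simp add: exp_minus)
  then show ?thesis using assms by (simp add: exp_of_nat_mult)
qed

lemma mu_intmult:
  fixes S :: "(real^'n) list" and G :: "(real^'n) set" and m :: int
  assumes G: "full_lattice G" and S: "goodA (dual_lattice G) A S" and j: "j < CARD('n)"
    and t: "t \<in> chamber_set (dual_lattice G) A" and m: "m \<noteq> 0"
    and E: "exp (cpair (S!j) z) \<noteq> 1" and Em: "exp (cpair (of_int m *\<^sub>R S!j) z) \<noteq> 1"
  shows "mu_coef (dual_lattice G) (S[j := of_int m *\<^sub>R S!j]) t z = mu_coef (dual_lattice G) S t z"
proof -
  let ?L = "dual_lattice G"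
  have gS: "goodl S" and SL: "set S \<subseteq> ?L" using S unfolding goodA_def by blast+
  have len: "length S = CARD('n)" using gS by (simp add: goodl_def)
  show ?thesis
  proof (cases "m > 0")
    case True
    then have e: "(of_int m :: real) = real (nat m)" by simp
    have pos: "nat m > 0" using True by simp
    have E1: "exp (cpair (real (nat m) *\<^sub>R S!j) z) \<noteq> 1" using Em unfolding e .
    show ?thesis unfolding e by (rule mu_posmult[OF G gS SL j pos E1])
  next
    case False
    then have mneg: "m < 0" using m by simp
    let ?S1 = "S[j := (-1) *\<^sub>R S!j]"
    have xL: "S!j \<in> ?L" using SL len j by auto
    have nxL: "(-1) *\<^sub>R S!j \<in> ?L" using dl_uminus[OF xL] by simp
    have S1: "goodA ?L A ?S1" by (rule goodA_upd[OF S j _ nxL]) simp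
    have gS1: "goodl ?S1" and S1L: "set ?S1 \<subseteq> ?L" using S1 unfolding goodA_def by blast+
    have S1j: "?S1 ! j = (-1) *\<^sub>R S!j" using len j by simp
    have nm: "real (nat (- m)) = - of_int m" using mneg by simp
    have sc: "real (nat (- m)) *\<^sub>R ?S1!j = of_int m *\<^sub>R S!j" unfolding S1j nm by simp
    have e: "?S1[j := real (nat (- m)) *\<^sub>R ?S1!j] = S[j := of_int m *\<^sub>R S!j]"
      unfolding sc by simp
    have pos: "nat (- m) > 0" using mneg by simp
    have E1: "exp (cpair (real (nat (- m)) *\<^sub>R ?S1!j) z) \<noteq> 1" unfolding sc by (rule Em)
    have "mu_coef ?L (?S1[j := real (nat (- m)) *\<^sub>R ?S1!j]) t z = mu_coef ?L ?S1 t z"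
      by (rule mu_posmult[OF G gS1 S1L j pos E1])
    also have "\<dots> = mu_coef ?L S t z" by (rule mu_neg[OF G S j t E])
    finally show ?thesis unfolding e .
  qed
qed

lemma rat_common:
  fixes G :: "(real^'n) set"
  assumes G: "full_lattice G" and u: "u \<in> dual_lattice G" and v: "v \<in> dual_lattice G" and v0: "v \<noteq> 0"
    and r: "u = r *\<^sub>R v" and r0: "r \<noteq> 0"
  shows "\<exists>x0\<in>dual_lattice G. \<exists>p q :: int. q \<noteq> 0 \<and> p \<noteq> 0 \<and> v = of_int q *\<^sub>R x0 \<and> u = of_int p *\<^sub>R x0"
proof -
  obtain b :: "'n \<Rightarrow> real^'n" where b: "\<And>k. b k \<in> G" "\<And>y. (\<forall>k. y \<bullet> b k = 0) \<Longrightarrow> y = 0"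
    "\<And>y. y \<in> dual_lattice G \<longleftrightarrow> (\<forall>k. y \<bullet> b k \<in> \<int>)"
    using full_lattice_basis[OF G] by metis
  obtain k where k: "v \<bullet> b k \<noteq> 0" using b(2) v0 by blast
  obtain a where a: "v \<bullet> b k = of_int a" using v b(3) by (metis Ints_cases)
  obtain c where c: "u \<bullet> b k = of_int c" using u b(3) by (metis Ints_cases)
  have a0: "a \<noteq> 0" using a k by simp
  define d where "d = gcd a c"
  have d0: "d \<noteq> 0" using a0 unfolding d_def by simp
  define q where "q = a div d"
  define p where "p = c div d"
  have aq: "a = q * d" unfolding q_def d_def by simp
  have cp: "c = p * d" unfolding p_def d_def by simp
  have cop: "coprime q p" unfolding q_def p_def d_def using div_gcd_coprime a0 by blast
  have q0: "q \<noteq> 0" using a0 aq by auto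
  have rqp: "r * of_int q = of_int p"
  proof -
    have "of_int c = r * of_int a" using c a r by (simp add: inner_scaleR_left)
    then have "of_int p * of_int d = r * of_int q * (of_int d :: real)" unfolding aq cp by simp
    then show ?thesis using d0 by simp
  qed
  have p0: "p \<noteq> 0" using rqp r0 q0 by auto
  define x0 where "x0 = (1 / of_int q) *\<^sub>R v"
  have vx: "v = of_int q *\<^sub>R x0" unfolding x0_def using q0 by simp
  have ux: "u = of_int p *\<^sub>R x0" unfolding x0_def r using q0 rqp[symmetric] by (simp add: field_simps)
  have "x0 \<in> dual_lattice G" unfolding b(3)
  proof
    fix k'
    obtain A where A: "v \<bullet> b k' = of_int A" using v b(3) by (metis Ints_cases)
    obtain B where B: "u \<bullet> b k' = of_int B" using u b(3) by (metis Ints_cases)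
    have "of_int B = r * of_int A" using A B r by (simp add: inner_scaleR_left)
    then have "of_int (q * B) = (of_int (p * A) :: real)" using rqp by (simp add: algebra_simps)
    then have "q * B = p * A" by (simp only: of_int_eq_iff)
    then have "q dvd p * A" by (metis dvd_triv_left)
    then have "q dvd A" using cop by (simp add: coprime_dvd_mult_right_iff)
    then obtain A' where "A = q * A'" by blast
    then have "x0 \<bullet> b k' = of_int A'" unfolding x0_def using A q0 by (simp add: inner_scaleR_left)
    then show "x0 \<bullet> b k' \<in> \<int>" by simp
  qed
  moreover have "\<exists>p' q' :: int. q' \<noteq> 0 \<and> p' \<noteq> 0 \<and> v = of_int q' *\<^sub>R x0 \<and> u = of_int p' *\<^sub>R x0"
    by (rule exI[of _ p], rule exI[of _ q]) (intro conjI q0 p0 vx ux)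
  ultimately show ?thesis by (rule bexI[rotated])
qed

lemma goodl_nth_nonzero:
  fixes S :: "(real^'n) list"
  assumes "goodl S" "j < CARD('n)" shows "S!j \<noteq> 0"
proof
  assume "S!j = 0"
  then have "crd S (S!j) j = 0" using crd_scale[OF assms, of 0 0] by simp
  then show False using crd_nth[OF assms assms(2)] by simp
qed

lemma mu_ratmult:
  fixes S :: "(real^'n) list" and G :: "(real^'n) set"
  assumes G: "full_lattice G" and S: "goodA (dual_lattice G) A S" and j: "j < CARD('n)"
    and t: "t \<in> chamber_set (dual_lattice G) A"
    and u: "u \<in> dual_lattice G" and r: "u = r *\<^sub>R S!j" and r0: "r \<noteq> 0"
    and E: "exp (cpair (S!j) z) \<noteq> 1" and Eu: "exp (cpair u z) \<noteq> 1"
  shows "mu_coef (dual_lattice G) (S[j := u]) t z = mu_coef (dual_lattice G) S t z"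
proof -
  let ?L = "dual_lattice G"
  have gS: "goodl S" and SL: "set S \<subseteq> ?L" using S unfolding goodA_def by blast+
  have len: "length S = CARD('n)" using gS by (simp add: goodl_def)
  have xL: "S!j \<in> ?L" using SL len j by auto
  have ex: "\<exists>x0\<in>?L. \<exists>p q :: int. q \<noteq> 0 \<and> p \<noteq> 0 \<and> S!j = of_int q *\<^sub>R x0 \<and> u = of_int p *\<^sub>R x0"
    by (rule rat_common[OF G u xL goodl_nth_nonzero[OF gS j] r r0])
  then obtain x0 where x0: "x0 \<in> ?L" and ex2: "\<exists>p q :: int. q \<noteq> 0 \<and> p \<noteq> 0 \<and> S!j = of_int q *\<^sub>R x0 \<and> u = of_int p *\<^sub>R x0"
    by (rule bexE)
  from ex2 obtain p q :: int where q0: "q \<noteq> 0" and p0: "p \<noteq> 0" and vq: "S!j = of_int q *\<^sub>R x0" and up: "u = of_int p *\<^sub>R x0"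
    by (elim exE conjE)
  let ?S0 = "S[j := x0]"
  have x0e: "(1 / of_int q) *\<^sub>R S!j = x0" unfolding vq using q0 by simp
  have cne: "1 / (of_int q :: real) \<noteq> 0" using q0 by simp
  have cL: "(1 / of_int q) *\<^sub>R S!j \<in> ?L" unfolding x0e by (rule x0)
  have S0: "goodA ?L A ?S0" using goodA_upd[OF S j cne cL] unfolding x0e .
  have S0j: "?S0 ! j = x0" using len j by simp
  have E0: "exp (cpair x0 z) \<noteq> 1"
  proof
    assume "exp (cpair x0 z) = 1"
    then have "exp (of_int q * cpair x0 z) = 1" by (rule exp_int_mult_one)
    moreover have "cpair (S!j) z = of_int q * cpair x0 z" unfolding vq cpair_scale by simp
    ultimately show False using E by simp
  qed
  have e1: "?S0[j := of_int q *\<^sub>R ?S0!j] = S" unfolding S0j vq[symmetric] by simp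
  have e2: "?S0[j := of_int p *\<^sub>R ?S0!j] = S[j := u]" unfolding S0j up[symmetric] by simp
  have Ep: "exp (cpair (of_int p *\<^sub>R ?S0!j) z) \<noteq> 1" unfolding S0j up[symmetric] by (rule Eu)
  have Eq: "exp (cpair (of_int q *\<^sub>R ?S0!j) z) \<noteq> 1" unfolding S0j vq[symmetric] by (rule E)
  have E0': "exp (cpair (?S0!j) z) \<noteq> 1" unfolding S0j by (rule E0)
  have "mu_coef ?L (?S0[j := of_int p *\<^sub>R ?S0!j]) t z = mu_coef ?L ?S0 t z"
    by (rule mu_intmult[OF G S0 j t p0 E0' Ep])
  moreover have "mu_coef ?L (?S0[j := of_int q *\<^sub>R ?S0!j]) t z = mu_coef ?L ?S0 t z"
    by (rule mu_intmult[OF G S0 j t q0 E0' Eq])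
  ultimately show ?thesis unfolding e1 e2 by simp
qed


lemma mu_par:
  fixes S S' :: "(real^'n) list" and G :: "(real^'n) set"
  assumes G: "full_lattice G" and S: "goodA (dual_lattice G) A S" and S': "goodA (dual_lattice G) A S'"
    and t: "t \<in> chamber_set (dual_lattice G) A"
    and par: "\<And>k. k < CARD('n) \<Longrightarrow> \<exists>r. r \<noteq> 0 \<and> S'!k = r *\<^sub>R S!k"
    and ES: "\<And>k. k < CARD('n) \<Longrightarrow> exp (cpair (S!k) z) \<noteq> 1"
    and ES': "\<And>k. k < CARD('n) \<Longrightarrow> exp (cpair (S'!k) z) \<noteq> 1"
  shows "mu_coef (dual_lattice G) S' t z = mu_coef (dual_lattice G) S t z"
proof -
  let ?L = "dual_lattice G"
  have len: "length S = CARD('n)" using S unfolding goodA_def goodl_def by blast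
  have len': "length S' = CARD('n)" using S' unfolding goodA_def goodl_def by blast
  have S'L: "set S' \<subseteq> ?L" using S' unfolding goodA_def by blast
  define T where "T m = take m S' @ drop m S" for m
  have Tlen: "length (T m) = CARD('n)" if "m \<le> CARD('n)" for m
    unfolding T_def using len len' that by simp
  have Tnth: "T m ! k = (if k < m then S'!k else S!k)" if "m \<le> CARD('n)" "k < CARD('n)" for m k
    unfolding T_def using len len' that by (auto simp: nth_append min_def)
  have Tsuc: "T (Suc m) = (T m)[m := S'!m]" if "m < CARD('n)" for m
  proof (rule nth_equalityI)
    show "length (T (Suc m)) = length ((T m)[m := S'!m])" using Tlen that by simp
    fix k assume "k < length (T (Suc m))"
    then have k: "k < CARD('n)" using Tlen that by simp
    show "T (Suc m) ! k = (T m)[m := S'!m] ! k"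
      using Tnth[of "Suc m" k] Tnth[of m k] k that Tlen[of m] by (auto simp: nth_list_update)
  qed
  have main: "goodA ?L A (T m) \<and> mu_coef ?L (T m) t z = mu_coef ?L S t z" if "m \<le> CARD('n)" for m
    using that
  proof (induction m)
    case 0
    then show ?case using S by (simp add: T_def)
  next
    case (Suc m)
    then have m: "m < CARD('n)" by simp
    have IH: "goodA ?L A (T m)" "mu_coef ?L (T m) t z = mu_coef ?L S t z" using Suc by auto
    obtain r where r: "r \<noteq> 0" "S'!m = r *\<^sub>R S!m" using par[OF m] by blast
    have Tm: "T m ! m = S!m" using Tnth[of m m] m by simp
    have u: "S'!m \<in> ?L" using S'L len' m by auto
    have ru: "S'!m = r *\<^sub>R (T m ! m)" unfolding Tm by (rule r(2))
    have E: "exp (cpair (T m ! m) z) \<noteq> 1" unfolding Tm by (rule ES[OF m])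
    have "mu_coef ?L ((T m)[m := S'!m]) t z = mu_coef ?L (T m) t z"
      by (rule mu_ratmult[OF G IH(1) m t u ru r(1) E ES'[OF m]])
    moreover have "goodA ?L A ((T m)[m := S'!m])"
    proof -
      have "r *\<^sub>R (T m ! m) \<in> ?L" using u unfolding ru .
      from goodA_upd[OF IH(1) m r(1) this] show ?thesis unfolding ru[symmetric] .
    qed
    ultimately show ?case unfolding Tsuc[OF m] using IH(2) by simp
  qed
  have "T (CARD('n)) = S'" unfolding T_def using len len' by simp
  then show ?thesis using main[of "CARD('n)"] by simp
qed


lemma card_le1_eq:
  assumes fin: "finite K" and uniq: "\<And>k k'. k \<in> K \<Longrightarrow> k' \<in> K \<Longrightarrow> P k \<Longrightarrow> P k' \<Longrightarrow> k = k'"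
  shows "(\<Sum>k\<in>K. if P k then 1 else 0 :: real) = (if \<exists>k\<in>K. P k then 1 else 0)"
proof (cases "\<exists>k\<in>K. P k")
  case True
  then obtain k0 where k0: "k0 \<in> K" "P k0" by blast
  have "{k\<in>K. P k} = {k0}" using k0 uniq by blast
  then have "(\<Sum>k\<in>K. if P k then 1 else 0 :: real) = (\<Sum>k\<in>{k0}. 1)"
    using sum.inter_filter[OF fin, of "\<lambda>_. 1 :: real" P] by simp
  then show ?thesis using True by simp
next
  case False
  then show ?thesis by (auto intro: sum.neutral)
qed

lemma line_box:
  fixes K :: "'i set" and a c0 :: "'i \<Rightarrow> real"
  defines "s0 \<equiv> \<lambda>k. - c0 k / a k"
  defines "s1 \<equiv> \<lambda>k. (1 - c0 k) / a k"
  defines "In \<equiv> \<lambda>s. \<forall>j\<in>K. 0 \<le> c0 j + s * a j \<and> c0 j + s * a j \<le> 1"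
  assumes fin: "finite K" and a0: "\<And>k. k \<in> K \<Longrightarrow> a k \<noteq> 0"
    and gen0: "\<And>k j. k \<in> K \<Longrightarrow> j \<in> K \<Longrightarrow> j \<noteq> k \<Longrightarrow> c0 j + s0 k * a j \<notin> \<int>"
    and gen1: "\<And>k j. k \<in> K \<Longrightarrow> j \<in> K \<Longrightarrow> j \<noteq> k \<Longrightarrow> c0 j + s1 k * a j \<notin> \<int>"
  shows "(\<Sum>k\<in>K. sgn (a k) * ((if In (s0 k) then 1 else 0) - (if In (s1 k) then 1 else 0))) = 0"
proof -
  define lo where "lo k = min (s0 k) (s1 k)" for k
  define hi where "hi k = max (s0 k) (s1 k)" for k
  have iv: "(0 \<le> c0 k + s * a k \<and> c0 k + s * a k \<le> 1) \<longleftrightarrow> (lo k \<le> s \<and> s \<le> hi k)" if "k \<in> K" for k s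
  proof (cases "a k > 0")
    case True
    then have "s0 k \<le> s1 k" unfolding s0_def s1_def by (simp add: field_simps)
    then show ?thesis unfolding lo_def hi_def using True
      by (auto simp: s0_def s1_def field_simps min_def max_def)
  next
    case False
    then have neg: "a k < 0" using a0[OF that] by simp
    then have "s1 k \<le> s0 k" unfolding s0_def s1_def by (simp add: field_simps)
    then show ?thesis unfolding lo_def hi_def using neg
      by (auto simp: s0_def s1_def field_simps min_def max_def)
  qed
  have In_iff: "In s \<longleftrightarrow> (\<forall>j\<in>K. lo j \<le> s \<and> s \<le> hi j)" for s
    unfolding In_def using iv by blast
  have val0: "c0 k + s0 k * a k = 0" if "k \<in> K" for k unfolding s0_def using a0[OF that] by simp
  have val1: "c0 k + s1 k * a k = 1" if "k \<in> K" for k unfolding s1_def using a0[OF that] by simp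
  have lo_int: "c0 k + lo k * a k \<in> \<int>" if "k \<in> K" for k
    unfolding lo_def min_def using val0[OF that] val1[OF that] by (auto split: if_splits)
  have hi_int: "c0 k + hi k * a k \<in> \<int>" if "k \<in> K" for k
    unfolding hi_def max_def using val0[OF that] val1[OF that] by (auto split: if_splits)
  have lo_gen: "c0 j + lo k * a j \<notin> \<int>" if "k \<in> K" "j \<in> K" "j \<noteq> k" for k j
    unfolding lo_def min_def using gen0[OF that] gen1[OF that] by auto
  have hi_gen: "c0 j + hi k * a j \<notin> \<int>" if "k \<in> K" "j \<in> K" "j \<noteq> k" for k j
    unfolding hi_def max_def using gen0[OF that] gen1[OF that] by auto
  have trm: "sgn (a k) * ((if In (s0 k) then 1 else 0) - (if In (s1 k) then 1 else 0)) =
      (if In (lo k) then 1 else 0) - (if In (hi k) then 1 else 0)" if "k \<in> K" for k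
  proof (cases "a k > 0")
    case True
    then have "s0 k \<le> s1 k" unfolding s0_def s1_def by (simp add: field_simps)
    then show ?thesis unfolding lo_def hi_def using True by (simp add: min_def max_def)
  next
    case False
    then have neg: "a k < 0" using a0[OF that] by simp
    then have "s1 k \<le> s0 k" unfolding s0_def s1_def by (simp add: field_simps)
    then show ?thesis unfolding lo_def hi_def using neg by (auto simp: min_def max_def)
  qed
  have uniq_lo: "k = k'" if "k \<in> K" "k' \<in> K" "In (lo k)" "In (lo k')" for k k'
  proof (rule ccontr)
    assume ne: "k \<noteq> k'"
    have "lo k' \<le> lo k" using that(1,3) In_iff that(2) by blast
    moreover have "lo k \<le> lo k'" using that(2,4) In_iff that(1) by blast
    ultimately have "lo k = lo k'" by simp
    then have "c0 k' + lo k * a k' \<in> \<int>" using lo_int[OF that(2)] by simp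
    then show False using lo_gen[OF that(1) that(2)] ne by auto
  qed
  have uniq_hi: "k = k'" if "k \<in> K" "k' \<in> K" "In (hi k)" "In (hi k')" for k k'
  proof (rule ccontr)
    assume ne: "k \<noteq> k'"
    have "hi k \<le> hi k'" using that(1,3) In_iff that(2) by blast
    moreover have "hi k' \<le> hi k" using that(2,4) In_iff that(1) by blast
    ultimately have "hi k = hi k'" by simp
    then have "c0 k' + hi k * a k' \<in> \<int>" using hi_int[OF that(2)] by simp
    then show False using hi_gen[OF that(1) that(2)] ne by auto
  qed
  have ex_lo: "(\<exists>k\<in>K. In (lo k)) \<longleftrightarrow> (K \<noteq> {} \<and> (\<exists>s. In s))"
  proof
    assume "\<exists>k\<in>K. In (lo k)" then show "K \<noteq> {} \<and> (\<exists>s. In s)" by blast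
  next
    assume a: "K \<noteq> {} \<and> (\<exists>s. In s)"
    then obtain s where s: "In s" by blast
    have "Max (lo ` K) \<in> lo ` K" using a fin by simp
    then obtain k where k: "k \<in> K" "lo k = Max (lo ` K)" by auto
    have "In (lo k)" unfolding In_iff
    proof
      fix j assume j: "j \<in> K"
      have "lo j \<le> lo k" unfolding k(2) using fin j by simp
      moreover have "lo k \<le> s" "s \<le> hi j" using s In_iff k(1) j by blast+
      ultimately show "lo j \<le> lo k \<and> lo k \<le> hi j" by simp
    qed
    then show "\<exists>k\<in>K. In (lo k)" using k(1) by blast
  qed
  have ex_hi: "(\<exists>k\<in>K. In (hi k)) \<longleftrightarrow> (K \<noteq> {} \<and> (\<exists>s. In s))"
  proof
    assume "\<exists>k\<in>K. In (hi k)" then show "K \<noteq> {} \<and> (\<exists>s. In s)" by blast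
  next
    assume a: "K \<noteq> {} \<and> (\<exists>s. In s)"
    then obtain s where s: "In s" by blast
    have "Min (hi ` K) \<in> hi ` K" using a fin by simp
    then obtain k where k: "k \<in> K" "hi k = Min (hi ` K)" by auto
    have "In (hi k)" unfolding In_iff
    proof
      fix j assume j: "j \<in> K"
      have "hi k \<le> hi j" unfolding k(2) using fin j by simp
      moreover have "lo j \<le> s" "s \<le> hi k" using s In_iff k(1) j by blast+
      ultimately show "lo j \<le> hi k \<and> hi k \<le> hi j" by simp
    qed
    then show "\<exists>k\<in>K. In (hi k)" using k(1) by blast
  qed
  have "(\<Sum>k\<in>K. sgn (a k) * ((if In (s0 k) then 1 else 0) - (if In (s1 k) then 1 else 0))) =
      (\<Sum>k\<in>K. (if In (lo k) then 1 else 0) - (if In (hi k) then 1 else 0))"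
    by (rule sum.cong) (simp_all add: trm)
  also have "\<dots> = (\<Sum>k\<in>K. if In (lo k) then 1 else 0) - (\<Sum>k\<in>K. if In (hi k) then 1 else 0)"
    by (simp add: sum_subtractf)
  also have "\<dots> = 0"
    using card_le1_eq[OF fin, of "\<lambda>k. In (lo k)"] card_le1_eq[OF fin, of "\<lambda>k. In (hi k)"]
      uniq_lo uniq_hi ex_lo ex_hi by simp
  finally show ?thesis .
qed


definition skip :: "nat \<Rightarrow> nat \<Rightarrow> nat" where
  "skip m j = (if j < m then j else Suc j)"

definition tlist :: "(nat \<Rightarrow> real^'n) \<Rightarrow> nat \<Rightarrow> (real^'n) list" where
  "tlist x m = map (\<lambda>j. x (skip m j)) [0..<CARD('n)]"

lemma tlist_len[simp]: "length (tlist (x :: nat \<Rightarrow> real^'n) m) = CARD('n)"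
  by (simp add: tlist_def)

lemma tlist_nth: "j < CARD('n) \<Longrightarrow> tlist (x :: nat \<Rightarrow> real^'n) m ! j = x (skip m j)"
  by (simp add: tlist_def)

lemma list_det_identical:
  fixes L :: "(real^'n::finite) list"
  assumes len: "length L = CARD('n)" and p: "p < CARD('n)" "q < CARD('n)" "p \<noteq> q" and e: "L!p = L!q"
  shows "list_det L = 0"
proof -
  obtain rp :: 'n where rp: "idx rp = p" using idx_surj[OF p(1)] by blast
  obtain rq :: 'n where rq: "idx rq = q" using idx_surj[OF p(2)] by blast
  have "rp \<noteq> rq" using rp rq p(3) by auto
  moreover have "row rp (\<chi> r. L ! idx r) = row rq (\<chi> r. L ! idx r)" using rp rq e by (simp add: row_def)
  ultimately show ?thesis unfolding list_det_def by (rule det_identical_rows)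
qed

lemma det_relation_consec:
  fixes x :: "nat \<Rightarrow> real^'n" and a :: "nat \<Rightarrow> real"
  assumes rel: "(\<Sum>k\<le>CARD('n). a k *\<^sub>R x k) = 0" and m: "m < CARD('n)"
  shows "a (Suc m) * list_det (tlist x m) + a m * list_det (tlist x (Suc m)) = 0"
proof -
  let ?n = "CARD('n)"
  let ?L = "tlist x m"
  obtain r0 :: 'n where r0: "idx r0 = m" using idx_surj[OF m] by blast
  have upd: "list_det (?L[m := v]) = det (\<chi> r. if r = r0 then v else ?L ! idx r)" for v
    by (rule list_det_upd) (simp_all add: r0)
  have "0 = list_det (?L[m := (\<Sum>k\<le>?n. a k *\<^sub>R x k)])"
  proof -
    have "list_det (?L[m := 0]) = det (\<chi> r. if r = r0 then 0 else ?L ! idx r)" by (rule upd)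
    also have "\<dots> = 0" by (rule det_row_0)
    finally show ?thesis using rel by simp
  qed
  also have "\<dots> = (\<Sum>k\<le>?n. det (\<chi> r. if r = r0 then a k *s x k else ?L ! idx r))"
    unfolding upd scalar_mult_eq_scaleR[symmetric] by (rule det_linear_row_sum) simp
  also have "\<dots> = (\<Sum>k\<le>?n. a k * list_det (?L[m := x k]))"
    unfolding upd by (rule sum.cong) (simp_all add: det_row_mul)
  also have "\<dots> = (\<Sum>k\<in>{m, Suc m}. a k * list_det (?L[m := x k]))"
  proof (rule sum.mono_neutral_right)
    show "finite {..?n}" by simp
    show "{m, Suc m} \<subseteq> {..?n}" using m by auto
    show "\<forall>k\<in>{..?n} - {m, Suc m}. a k * list_det (?L[m := x k]) = 0"
    proof
      fix k assume k: "k \<in> {..?n} - {m, Suc m}"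
      define p where "p = (if k < m then k else k - 1)"
      have p: "p < ?n" "p \<noteq> m" "skip m p = k" using k m unfolding p_def skip_def by auto
      have "list_det (?L[m := x k]) = 0"
      proof (rule list_det_identical[of _ p m])
        show "?L[m := x k] ! p = ?L[m := x k] ! m" using p m by (simp add: tlist_nth)
      qed (use p m in auto)
      then show "a k * list_det (?L[m := x k]) = 0" by simp
    qed
  qed
  also have "\<dots> = a m * list_det (?L[m := x m]) + a (Suc m) * list_det (?L[m := x (Suc m)])" by simp
  also have "?L[m := x (Suc m)] = ?L"
    by (rule nth_equalityI) (auto simp: tlist_nth nth_list_update skip_def)
  also have "?L[m := x m] = tlist x (Suc m)"
  proof (rule nth_equalityI)
    fix i assume "i < length (?L[m := x m])"
    then have i: "i < CARD('n)" by simp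
    show "?L[m := x m] ! i = tlist x (Suc m) ! i"
    proof (cases "i = m")
      case True then show ?thesis using i by (simp add: tlist_nth skip_def)
    next
      case False then show ?thesis using i by (simp add: tlist_nth skip_def nth_list_update)
    qed
  qed simp
  finally show ?thesis by simp
qed

lemma det_relation_all:
  fixes x :: "nat \<Rightarrow> real^'n" and a :: "nat \<Rightarrow> real"
  assumes rel: "(\<Sum>k\<le>CARD('n). a k *\<^sub>R x k) = 0" and a0: "\<And>k. k \<le> CARD('n) \<Longrightarrow> a k \<noteq> 0"
  shows "\<forall>m\<le>CARD('n). (-1) ^ m * list_det (tlist x m) = (list_det (tlist x 0) / a 0) * a m"
proof (intro allI impI)
  fix m assume "m \<le> CARD('n)"
  then show "(-1) ^ m * list_det (tlist x m) = (list_det (tlist x 0) / a 0) * a m"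
  proof (induction m)
    case 0 then show ?case using a0[of 0] by simp
  next
    case (Suc m)
    then have m: "m < CARD('n)" by simp
    have IH: "(-1) ^ m * list_det (tlist x m) = (list_det (tlist x 0) / a 0) * a m" using Suc by simp
    have r: "a (Suc m) * list_det (tlist x m) + a m * list_det (tlist x (Suc m)) = 0"
      by (rule det_relation_consec[OF rel m])
    have am: "a m \<noteq> 0" using a0 m by simp
    have "list_det (tlist x (Suc m)) = - a (Suc m) * list_det (tlist x m) / a m"
      using r am by (simp add: field_simps add_eq_0_iff)
    then have "(-1) ^ Suc m * list_det (tlist x (Suc m)) = a (Suc m) * ((-1) ^ m * list_det (tlist x m)) / a m"
      by simp
    also have "\<dots> = (list_det (tlist x 0) / a 0) * a (Suc m)" unfolding IH using am by simp
    finally show ?case .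
  qed
qed


lemma skip_lt: "m \<le> n \<Longrightarrow> j < n \<Longrightarrow> skip m j \<le> n" by (simp add: skip_def)
lemma skip_ne: "skip m j \<noteq> m" by (simp add: skip_def)

lemma skip_image: "m \<le> n \<Longrightarrow> skip m ` {..<n} = {..n} - {m}"
proof (intro set_eqI iffI)
  fix k assume "m \<le> n" "k \<in> skip m ` {..<n}" then show "k \<in> {..n} - {m}" by (auto simp: skip_def)
next
  fix k assume mn: "m \<le> n" and k: "k \<in> {..n} - {m}"
  show "k \<in> skip m ` {..<n}"
  proof (cases "k < m")
    case True then show ?thesis using mn by (intro image_eqI[of _ _ k]) (auto simp: skip_def)
  next
    case False then show ?thesis using k by (intro image_eqI[of _ _ "k - 1"]) (auto simp: skip_def)
  qed
qed

lemma skip_inj: "inj_on (skip m) A" by (auto simp: inj_on_def skip_def split: if_splits)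

lemma sum_skip: "m \<le> n \<Longrightarrow> (\<Sum>j<n. g (skip m j)) = (\<Sum>k\<in>{..n} - {m}. g k)"
  using sum.reindex[OF skip_inj[of m "{..<n}"], of g] skip_image[of m n] by simp

lemma prod_skip: "m \<le> n \<Longrightarrow> (\<Prod>j<n. g (skip m j)) = (\<Prod>k\<in>{..n} - {m}. g k)"
  using prod.reindex[OF skip_inj[of m "{..<n}"], of g] skip_image[of m n] by simp

lemma tlist_last_nth: "k < CARD('n) \<Longrightarrow> tlist (x :: nat \<Rightarrow> real^'n) (CARD('n)) ! k = x k"
  by (simp add: tlist_nth skip_def)

lemma rel_unique:
  fixes x :: "nat \<Rightarrow> real^'n"
  assumes g: "goodl (tlist x (CARD('n)))" and rel: "(\<Sum>k\<le>CARD('n). a k *\<^sub>R x k) = 0"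
    and an: "a (CARD('n)) \<noteq> 0" and relb: "(\<Sum>k\<le>CARD('n). b k *\<^sub>R x k) = 0" and k: "k \<le> CARD('n)"
  shows "b k = (b (CARD('n)) / a (CARD('n))) * a k"
proof -
  let ?n = "CARD('n)"
  define c where "c k = b k - (b ?n / a ?n) * a k" for k
  have "(\<Sum>k\<le>?n. c k *\<^sub>R x k) = (\<Sum>k\<le>?n. b k *\<^sub>R x k) - (b ?n / a ?n) *\<^sub>R (\<Sum>k\<le>?n. a k *\<^sub>R x k)"
    by (simp add: c_def scaleR_diff_left sum_subtractf scaleR_sum_right)
  then have s0: "(\<Sum>k\<le>?n. c k *\<^sub>R x k) = 0" using rel relb by simp
  have cn: "c ?n = 0" using an by (simp add: c_def)
  have "(\<Sum>k\<le>?n. c k *\<^sub>R x k) = (\<Sum>k<?n. c k *\<^sub>R x k) + c ?n *\<^sub>R x ?n"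
    by (simp add: lessThan_Suc_atMost[symmetric])
  then have "(\<Sum>k<?n. c k *\<^sub>R tlist x ?n ! k) = 0" using s0 cn by (simp add: tlist_last_nth)
  then have "\<forall>j<?n. c j = 0" using goodl_lincomb_zero[OF g] by blast
  then have "c k = 0" using k cn by (cases "k = ?n") auto
  then show ?thesis by (simp add: c_def)
qed

context
  fixes G :: "(real^'n) set" and A :: "(real^'n) set set" and x :: "nat \<Rightarrow> real^'n" and a :: "nat \<Rightarrow> real"
    and t0 :: "real^'n"
  assumes G: "full_lattice G"
    and good: "\<And>m. m \<le> CARD('n) \<Longrightarrow> goodA (dual_lattice G) A (tlist x m)"
    and t0: "t0 \<in> chamber_set (dual_lattice G) A"
    and rel: "(\<Sum>k\<le>CARD('n). a k *\<^sub>R x k) = 0"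
    and a0: "\<And>k. k \<le> CARD('n) \<Longrightarrow> a k \<noteq> 0"
    and xL: "\<And>k. k \<le> CARD('n) \<Longrightarrow> x k \<in> dual_lattice G"
begin

lemma crd_tlist_line:
  fixes c :: "nat \<Rightarrow> real" and w :: "real^'n"
  assumes m: "m \<le> CARD('n)" and cw: "(\<Sum>k\<le>CARD('n). c k *\<^sub>R x k) = w + e *\<^sub>R x m" and cm: "c m = e"
    and j: "j < CARD('n)"
  shows "crd (tlist x m) w j = c (skip m j)"
proof (rule crd_unique)
  show "goodl (tlist x m)" using good[OF m] by (simp add: goodA_def)
  have "(\<Sum>j<CARD('n). c (skip m j) *\<^sub>R tlist x m ! j) = (\<Sum>j<CARD('n). c (skip m j) *\<^sub>R x (skip m j))"
    by (rule sum.cong) (simp_all add: tlist_nth)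
  also have "\<dots> = (\<Sum>k\<in>{..CARD('n)} - {m}. c k *\<^sub>R x k)" by (rule sum_skip[OF m])
  also have "\<dots> = (\<Sum>k\<le>CARD('n). c k *\<^sub>R x k) - c m *\<^sub>R x m"
    using m by (simp add: sum_diff1)
  also have "\<dots> = w" using cw cm by simp
  finally show "(\<Sum>j<CARD('n). c (skip m j) *\<^sub>R tlist x m ! j) = w" .
qed (rule j)

lemma core_pointwise:
  assumes y: "y \<in> dual_lattice G"
  shows "(\<Sum>m\<le>CARD('n). sgn (a m) * ((if y \<in> acell (dual_lattice G) (tlist x m) t0 then 1 else 0)
            - (if y - x m \<in> acell (dual_lattice G) (tlist x m) t0 then 1 else 0))) = 0"
proof -
  let ?n = "CARD('n)"
  let ?L = "dual_lattice G"
  define w where "w = y + t0"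
  have gn: "goodl (tlist x ?n)" using good[of ?n] by (simp add: goodA_def)
  define c0 where "c0 k = (if k < ?n then crd (tlist x ?n) w k else 0)" for k
  have c0w: "(\<Sum>k\<le>?n. c0 k *\<^sub>R x k) = w"
  proof -
    have "(\<Sum>k\<le>?n. c0 k *\<^sub>R x k) = (\<Sum>k<?n. c0 k *\<^sub>R x k) + c0 ?n *\<^sub>R x ?n"
      by (simp add: lessThan_Suc_atMost[symmetric])
    also have "\<dots> = (\<Sum>k<?n. crd (tlist x ?n) w k *\<^sub>R tlist x ?n ! k)"
      by (simp add: c0_def tlist_last_nth)
    also have "\<dots> = w" by (rule crd_sum[OF gn])
    finally show ?thesis .
  qed
  define s0 where "s0 = (\<lambda>k. - c0 k / a k)"
  define s1 where "s1 = (\<lambda>k. (1 - c0 k) / a k)"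
  define In where "In = (\<lambda>s. \<forall>j\<in>{..?n}. 0 \<le> c0 j + s * a j \<and> c0 j + s * a j \<le> 1)"
  have lin: "(\<Sum>k\<le>?n. (c0 k + s * a k) *\<^sub>R x k) = w" for s
  proof -
    have "(\<Sum>k\<le>?n. (c0 k + s * a k) *\<^sub>R x k) = (\<Sum>k\<le>?n. c0 k *\<^sub>R x k) + s *\<^sub>R (\<Sum>k\<le>?n. a k *\<^sub>R x k)"
      by (simp add: scaleR_add_left sum.distrib scaleR_sum_right)
    then show ?thesis using c0w rel by simp
  qed
  have crd0: "crd (tlist x m) w j = c0 (skip m j) + s0 m * a (skip m j)" if "m \<le> ?n" "j < ?n" for m j
  proof (rule crd_tlist_line[OF that(1) _ _ that(2), where e=0])
    show "(\<Sum>k\<le>?n. (c0 k + s0 m * a k) *\<^sub>R x k) = w + 0 *\<^sub>R x m" using lin by simp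
    show "c0 m + s0 m * a m = 0" using a0[OF that(1)] by (simp add: s0_def)
  qed
  have crd1: "crd (tlist x m) (w - x m) j = c0 (skip m j) + s1 m * a (skip m j)" if "m \<le> ?n" "j < ?n" for m j
  proof (rule crd_tlist_line[OF that(1) _ _ that(2), where e=1])
    show "(\<Sum>k\<le>?n. (c0 k + s1 m * a k) *\<^sub>R x k) = (w - x m) + 1 *\<^sub>R x m" using lin by simp
    show "c0 m + s1 m * a m = 1" using a0[OF that(1)] by (simp add: s1_def)
  qed
  have skip_surj: "\<exists>j<?n. skip m j = k" if "m \<le> ?n" "k \<le> ?n" "k \<noteq> m" for m k
    using skip_image[OF that(1)] that(2,3) by (metis (no_types, lifting) Diff_iff atMost_iff imageE lessThan_iff singletonD)
  have gen: "crd (tlist x m) (v + t0) j \<notin> \<int>" if "m \<le> ?n" "j < ?n" "v \<in> ?L" for m j v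
    using generic_crd[OF _ _ _ t0 that(3) that(2)] good[OF that(1)] unfolding goodA_def by blast
  have memA: "v \<in> acell ?L (tlist x m) t0 \<longleftrightarrow>
      v \<in> ?L \<and> (\<forall>j<?n. 0 \<le> crd (tlist x m) (v + t0) j \<and> crd (tlist x m) (v + t0) j \<le> 1)" if "m \<le> ?n" for m v
  proof -
    have g: "goodl (tlist x m)" using good[OF that] by (simp add: goodA_def)
    show ?thesis
    proof
      assume "v \<in> acell ?L (tlist x m) t0"
      then show "v \<in> ?L \<and> (\<forall>j<?n. 0 \<le> crd (tlist x m) (v + t0) j \<and> crd (tlist x m) (v + t0) j \<le> 1)"
        by (auto simp: acell_def cube_crd[OF g])
    next
      assume v: "v \<in> ?L \<and> (\<forall>j<?n. 0 \<le> crd (tlist x m) (v + t0) j \<and> crd (tlist x m) (v + t0) j \<le> 1)"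
      have "crd (tlist x m) (v + t0) j \<noteq> 1" if "j < ?n" for j using gen[OF \<open>m \<le> ?n\<close> that] v by (metis Ints_1)
      then show "v \<in> acell ?L (tlist x m) t0" using v by (auto simp: acell_def cube_crd[OF g] order_le_less)
    qed
  qed
  have eq0: "(y \<in> acell ?L (tlist x m) t0) \<longleftrightarrow> In (s0 m)" if m: "m \<le> ?n" for m
  proof -
    have "(y \<in> acell ?L (tlist x m) t0) \<longleftrightarrow> (\<forall>j<?n. 0 \<le> c0 (skip m j) + s0 m * a (skip m j) \<and> c0 (skip m j) + s0 m * a (skip m j) \<le> 1)"
      using memA[OF m, of y] y crd0[OF m] unfolding w_def by simp
    also have "\<dots> \<longleftrightarrow> In (s0 m)"
    proof
      assume H: "\<forall>j<?n. 0 \<le> c0 (skip m j) + s0 m * a (skip m j) \<and> c0 (skip m j) + s0 m * a (skip m j) \<le> 1"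
      show "In (s0 m)" unfolding In_def
      proof
        fix k assume k: "k \<in> {..?n}"
        show "0 \<le> c0 k + s0 m * a k \<and> c0 k + s0 m * a k \<le> 1"
        proof (cases "k = m")
          case True then show ?thesis using a0[OF m] by (simp add: s0_def)
        next
          case False then obtain j where "j < ?n" "skip m j = k" using skip_surj[OF m] k by auto
          then show ?thesis using H by auto
        qed
      qed
    next
      assume "In (s0 m)" then show "\<forall>j<?n. 0 \<le> c0 (skip m j) + s0 m * a (skip m j) \<and> c0 (skip m j) + s0 m * a (skip m j) \<le> 1"
        unfolding In_def using skip_lt[OF m] by auto
    qed
    finally show ?thesis .
  qed
  have eq1: "(y - x m \<in> acell ?L (tlist x m) t0) \<longleftrightarrow> In (s1 m)" if m: "m \<le> ?n" for m
  proof -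
    have yx: "y - x m \<in> ?L" using dl_diff[OF y xL[OF m]] .
    have "(y - x m \<in> acell ?L (tlist x m) t0) \<longleftrightarrow> (\<forall>j<?n. 0 \<le> c0 (skip m j) + s1 m * a (skip m j) \<and> c0 (skip m j) + s1 m * a (skip m j) \<le> 1)"
    proof -
      have e: "y - x m + t0 = w - x m" unfolding w_def by simp
      show ?thesis using memA[OF m, of "y - x m", unfolded e] yx crd1[OF m] by simp
    qed
    also have "\<dots> \<longleftrightarrow> In (s1 m)"
    proof
      assume H: "\<forall>j<?n. 0 \<le> c0 (skip m j) + s1 m * a (skip m j) \<and> c0 (skip m j) + s1 m * a (skip m j) \<le> 1"
      show "In (s1 m)" unfolding In_def
      proof
        fix k assume k: "k \<in> {..?n}"
        show "0 \<le> c0 k + s1 m * a k \<and> c0 k + s1 m * a k \<le> 1"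
        proof (cases "k = m")
          case True then show ?thesis using a0[OF m] by (simp add: s1_def)
        next
          case False then obtain j where "j < ?n" "skip m j = k" using skip_surj[OF m] k by auto
          then show ?thesis using H by auto
        qed
      qed
    next
      assume "In (s1 m)" then show "\<forall>j<?n. 0 \<le> c0 (skip m j) + s1 m * a (skip m j) \<and> c0 (skip m j) + s1 m * a (skip m j) \<le> 1"
        unfolding In_def using skip_lt[OF m] by auto
    qed
    finally show ?thesis .
  qed
  have lb: "(\<Sum>k\<in>{..?n}. sgn (a k) * ((if In (s0 k) then 1 else 0) - (if In (s1 k) then 1 else 0))) = 0"
    unfolding s0_def s1_def In_def
  proof (rule line_box)
    show "finite {..?n}" by simp
    show "a k \<noteq> 0" if "k \<in> {..?n}" for k using a0 that by simp
    show "c0 j + - c0 k / a k * a j \<notin> \<int>" if kjn: "k \<in> {..?n}" "j \<in> {..?n}" "j \<noteq> k" for k j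
    proof -
      obtain i where i: "i < ?n" "skip k i = j" using skip_surj[of k j] kjn by auto
      have "crd (tlist x k) (y + t0) i \<notin> \<int>" using gen[of k i y] kjn i y by simp
      then show ?thesis using crd0[of k i] kjn i unfolding w_def s0_def by simp
    qed
    show "c0 j + (1 - c0 k) / a k * a j \<notin> \<int>" if kjn: "k \<in> {..?n}" "j \<in> {..?n}" "j \<noteq> k" for k j
    proof -
      obtain i where i: "i < ?n" "skip k i = j" using skip_surj[of k j] kjn by auto
      have yx: "y - x k \<in> ?L" using dl_diff[OF y xL] kjn by simp
      have "crd (tlist x k) (y - x k + t0) i \<notin> \<int>" using gen[of k i "y - x k"] kjn i yx by simp
      moreover have "y - x k + t0 = w - x k" unfolding w_def by simp
      ultimately show ?thesis using crd1[of k i] kjn i unfolding s1_def by simp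
    qed
  qed
  have "(\<Sum>m\<le>?n. sgn (a m) * ((if y \<in> acell ?L (tlist x m) t0 then 1 else 0)
            - (if y - x m \<in> acell ?L (tlist x m) t0 then 1 else 0))) =
      (\<Sum>k\<in>{..?n}. sgn (a k) * ((if In (s0 k) then 1 else 0) - (if In (s1 k) then 1 else 0)))"
    by (rule sum.cong) (simp_all add: eq0 eq1)
  then show ?thesis using lb by simp
qed

lemma core_g:
  fixes g :: "real^'n \<Rightarrow> 'b::real_vector"
  shows "(\<Sum>m\<le>CARD('n). sgn (a m) *\<^sub>R ((\<Sum>y\<in>acell (dual_lattice G) (tlist x m) t0. g y)
            - (\<Sum>y\<in>acell (dual_lattice G) (tlist x m) t0. g (y + x m)))) = 0"
proof -
  let ?n = "CARD('n)"
  let ?L = "dual_lattice G"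
  let ?A = "\<lambda>m. acell ?L (tlist x m) t0"
  define U where "U = (\<Union>m\<le>?n. ?A m \<union> (\<lambda>y. y + x m) ` ?A m)"
  have finA: "finite (?A m)" for m by (rule finite_acell[OF G])
  have finU: "finite U" unfolding U_def using finA by auto
  have AU: "?A m \<subseteq> U" if "m \<le> ?n" for m unfolding U_def using that by blast
  have AxU: "(\<lambda>y. y + x m) ` ?A m \<subseteq> U" if "m \<le> ?n" for m unfolding U_def using that by blast
  have UL: "U \<subseteq> ?L"
  proof
    fix y assume "y \<in> U"
    then obtain m where m: "m \<le> ?n" "y \<in> ?A m \<or> y \<in> (\<lambda>y. y + x m) ` ?A m" unfolding U_def by blast
    from m(2) show "y \<in> ?L"
    proof
      assume "y \<in> ?A m" then show ?thesis by (simp add: acell_def)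
    next
      assume "y \<in> (\<lambda>y. y + x m) ` ?A m"
      then obtain v where "v \<in> ?A m" "y = v + x m" by blast
      then show ?thesis using dl_add[of v G "x m"] xL[OF m(1)] by (simp add: acell_def)
    qed
  qed
  define ind where "ind m y = (if y \<in> ?A m then 1 else 0) - (if y - x m \<in> ?A m then 1 else (0::real))" for m y
  have step: "(\<Sum>y\<in>?A m. g y) - (\<Sum>y\<in>?A m. g (y + x m)) = (\<Sum>y\<in>U. ind m y *\<^sub>R g y)" if m: "m \<le> ?n" for m
  proof -
    have e1: "(\<Sum>y\<in>?A m. g y) = (\<Sum>y\<in>U. if y \<in> ?A m then g y else 0)"
    proof -
      have "?A m = {y \<in> U. y \<in> ?A m}" using AU[OF m] by blast
      then have "(\<Sum>y\<in>?A m. g y) = (\<Sum>y\<in>{y \<in> U. y \<in> ?A m}. g y)" by simp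
      also have "\<dots> = (\<Sum>y\<in>U. if y \<in> ?A m then g y else 0)" by (rule sum.inter_filter[OF finU])
      finally show ?thesis .
    qed
    have e2: "(\<Sum>y\<in>?A m. g (y + x m)) = (\<Sum>y\<in>U. if y - x m \<in> ?A m then g y else 0)"
    proof -
      have inj: "inj_on (\<lambda>y. y + x m) (?A m)" by (auto simp: inj_on_def)
      have "(\<Sum>y\<in>?A m. g (y + x m)) = (\<Sum>y\<in>(\<lambda>y. y + x m) ` ?A m. g y)"
        using sum.reindex[OF inj, of g] by simp
      also have "(\<lambda>y. y + x m) ` ?A m = {y \<in> U. y - x m \<in> ?A m}"
      proof (intro set_eqI iffI)
        fix y assume "y \<in> (\<lambda>y. y + x m) ` ?A m" then show "y \<in> {y \<in> U. y - x m \<in> ?A m}" using AxU[OF m] by auto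
      next
        fix y assume "y \<in> {y \<in> U. y - x m \<in> ?A m}"
        then have "y - x m \<in> ?A m" by blast
        then show "y \<in> (\<lambda>y. y + x m) ` ?A m" by (rule rev_image_eqI) simp
      qed
      also have "(\<Sum>y\<in>{y \<in> U. y - x m \<in> ?A m}. g y) = (\<Sum>y\<in>U. if y - x m \<in> ?A m then g y else 0)"
        by (rule sum.inter_filter[OF finU])
      finally show ?thesis .
    qed
    show ?thesis unfolding e1 e2 sum_subtractf[symmetric]
      by (rule sum.cong) (simp_all add: ind_def scaleR_diff_left)
  qed
  have "(\<Sum>m\<le>?n. sgn (a m) *\<^sub>R ((\<Sum>y\<in>?A m. g y) - (\<Sum>y\<in>?A m. g (y + x m)))) =
      (\<Sum>m\<le>?n. sgn (a m) *\<^sub>R (\<Sum>y\<in>U. ind m y *\<^sub>R g y))"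
    by (rule sum.cong) (simp_all add: step)
  also have "\<dots> = (\<Sum>y\<in>U. (\<Sum>m\<le>?n. sgn (a m) * ind m y) *\<^sub>R g y)"
    by (simp add: scaleR_sum_right scaleR_sum_left sum.swap[of _ U])
  also have "\<dots> = 0"
  proof (rule sum.neutral, rule ballI)
    fix y assume "y \<in> U"
    then have "y \<in> ?L" using UL by blast
    then have "(\<Sum>m\<le>?n. sgn (a m) * ind m y) = 0" unfolding ind_def by (rule core_pointwise)
    then show "(\<Sum>m\<le>?n. sgn (a m) * ind m y) *\<^sub>R g y = 0" by simp
  qed
  finally show ?thesis .
qed

lemma vol_rel:
  assumes m: "m \<le> CARD('n)"
  shows "real (card (acell (dual_lattice G) (tlist x m) t0)) =
         real (card (acell (dual_lattice G) (tlist x (CARD('n))) t0)) * \<bar>a m\<bar> / \<bar>a (CARD('n))\<bar>"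
proof -
  let ?n = "CARD('n)"
  let ?A = "\<lambda>m. acell (dual_lattice G) (tlist x m) t0"
  define V where "V m = real (card (?A m))" for m
  have sm: "(\<Sum>y\<in>?A k. y) - (\<Sum>y\<in>?A k. y + x k) = - V k *\<^sub>R x k" for k
    by (simp add: sum.distrib V_def scaleR_conv_of_real)
  have "(\<Sum>k\<le>?n. sgn (a k) *\<^sub>R ((\<Sum>y\<in>?A k. y) - (\<Sum>y\<in>?A k. y + x k))) = 0"
    by (rule core_g)
  then have rb: "(\<Sum>k\<le>?n. (- (sgn (a k) * V k)) *\<^sub>R x k) = 0" unfolding sm by simp
  have gn: "goodl (tlist x ?n)" using good[of ?n] by (simp add: goodA_def)
  have "- (sgn (a m) * V m) = (- (sgn (a ?n) * V ?n) / a ?n) * a m"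
    by (rule rel_unique[OF gn rel a0[of ?n] rb m]) simp
  then have "sgn (a m) * V m = (sgn (a ?n) / a ?n) * V ?n * a m" by simp
  moreover have "sgn (a ?n) / a ?n = 1 / \<bar>a ?n\<bar>" using a0[of ?n] by (simp add: sgn_if)
  ultimately have e: "sgn (a m) * V m = V ?n * a m / \<bar>a ?n\<bar>" by simp
  have "V m = sgn (a m) * (sgn (a m) * V m)" using a0[OF m] by (simp add: sgn_if)
  also have "\<dots> = V ?n * (sgn (a m) * a m) / \<bar>a ?n\<bar>" unfolding e by simp
  also have "sgn (a m) * a m = \<bar>a m\<bar>" by (simp add: sgn_mult_abs abs_sgn)
  finally show ?thesis unfolding V_def by simp
qed

lemma final_sum:
  assumes Ez: "\<And>k. k \<le> CARD('n) \<Longrightarrow> exp (cpair (x k) z) \<noteq> 1"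
  shows "(\<Sum>m\<le>CARD('n). (-1) ^ (m + 1) * mu_coef (dual_lattice G) (tlist x m) t0 z) = 0"
proof -
  let ?n = "CARD('n)"
  let ?L = "dual_lattice G"
  let ?A = "\<lambda>m. acell ?L (tlist x m) t0"
  define V where "V m = real (card (?A m))" for m
  define N where "N m = (\<Sum>y\<in>?A m. exp (cpair y z))" for m
  define E where "E m = exp (cpair (x m) z)" for m
  define d where "d m = list_det (tlist x m)" for m
  define \<kappa> where "\<kappa> = d 0 / a 0"
  define P where "P = (\<Prod>k\<le>?n. 1 / (1 - E k))"
  define c where "c = - (\<kappa> * \<bar>a ?n\<bar> / V ?n)"
  have dk: "(-1) ^ m * d m = \<kappa> * a m" if "m \<le> ?n" for m
    using det_relation_all[OF rel a0] that unfolding d_def \<kappa>_def by (simp add: mult.commute)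
  have gm: "goodl (tlist x m)" "set (tlist x m) \<subseteq> ?L" if "m \<le> ?n" for m
    using good[OF that] by (simp_all add: goodA_def)
  have Vpos: "V m > 0" if "m \<le> ?n" for m
    unfolding V_def using acell_nonempty[OF G gm[OF that]] by simp
  have Vm: "V m = V ?n * \<bar>a m\<bar> / \<bar>a ?n\<bar>" if "m \<le> ?n" for m
    unfolding V_def by (rule vol_rel[OF that])
  have realid: "(-1) ^ (m + 1) * (d m / V m) = c * sgn (a m)" if m: "m \<le> ?n" for m
  proof -
    have an: "a ?n \<noteq> 0" and am: "a m \<noteq> 0" using a0 m by auto
    have Vn: "V ?n > 0" using Vpos by simp
    have s1: "(-1::real) ^ m * (-1) ^ m = 1" by (simp add: power_add[symmetric])
    have "(-1) ^ (m + 1) * (d m / V m) = - (((-1) ^ m * d m) / V m)"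
    proof -
      have "(-1::real) ^ (m + 1) * d m = - ((-1) ^ m * ((-1) ^ m * ((-1) ^ m * d m)))" using s1 by simp
      then show ?thesis by (simp add: s1)
    qed
    also have "\<dots> = - (\<kappa> * a m / (V ?n * \<bar>a m\<bar> / \<bar>a ?n\<bar>))" using dk[OF m] Vm[OF m] by simp
    also have "\<dots> = c * (a m / \<bar>a m\<bar>)" unfolding c_def using an am Vn by (simp add: field_simps)
    also have "a m / \<bar>a m\<bar> = sgn (a m)" using am by (simp add: sgn_if)
    finally show ?thesis .
  qed
  have prodm: "(\<Prod>j<?n. 1 / (1 - exp (cpair (tlist x m ! j) z))) = P * (1 - E m)" if m: "m \<le> ?n" for m
  proof -
    have "(\<Prod>j<?n. 1 / (1 - exp (cpair (tlist x m ! j) z))) = (\<Prod>j<?n. 1 / (1 - E (skip m j)))"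
      by (rule prod.cong) (simp_all add: tlist_nth E_def)
    also have "\<dots> = (\<Prod>k\<in>{..?n} - {m}. 1 / (1 - E k))" by (rule prod_skip[OF m])
    also have "\<dots> = P * (1 - E m)"
    proof -
      have "P = 1 / (1 - E m) * (\<Prod>k\<in>{..?n} - {m}. 1 / (1 - E k))"
        unfolding P_def using m by (simp add: prod.remove)
      moreover have "1 - E m \<noteq> 0" using Ez[OF m] by (simp add: E_def)
      ultimately show ?thesis by simp
    qed
    finally show ?thesis .
  qed
  have mum: "(-1) ^ (m + 1) * mu_coef ?L (tlist x m) t0 z = complex_of_real c * P * (sgn (a m) *\<^sub>R ((1 - E m) * N m))"
    if m: "m \<le> ?n" for m
  proof -
    have li: "lattice_index ?L (tlist x m) = card (?A m)" by (rule lattice_index_card[OF G gm[OF m]])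
    have "mu_coef ?L (tlist x m) t0 z = (1 / of_nat (card (?A m))) * complex_of_real (d m) * (P * (1 - E m)) * N m"
      unfolding mu_coef_def acell_mu_eq li d_def N_def using prodm[OF m] by simp
    also have "\<dots> = complex_of_real (d m / V m) * P * ((1 - E m) * N m)"
      unfolding V_def by (simp add: field_simps)
    finally have "(-1) ^ (m + 1) * mu_coef ?L (tlist x m) t0 z = complex_of_real ((-1) ^ (m + 1) * (d m / V m)) * P * ((1 - E m) * N m)"
      by simp
    also have "\<dots> = complex_of_real c * P * (sgn (a m) *\<^sub>R ((1 - E m) * N m))"
      unfolding realid[OF m] by (simp add: scaleR_conv_of_real)
    finally show ?thesis .
  qed
  have shiftN: "(\<Sum>y\<in>?A m. exp (cpair (y + x m) z)) = E m * N m" for m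
    unfolding N_def E_def by (simp add: cpair_add exp_add sum_distrib_left mult.commute)
  have cg: "(\<Sum>m\<le>?n. sgn (a m) *\<^sub>R ((1 - E m) * N m)) = 0"
  proof -
    have "(\<Sum>m\<le>?n. sgn (a m) *\<^sub>R ((\<Sum>y\<in>?A m. exp (cpair y z)) - (\<Sum>y\<in>?A m. exp (cpair (y + x m) z)))) = 0"
      by (rule core_g)
    then show ?thesis unfolding shiftN by (simp add: N_def left_diff_distrib)
  qed
  have "(\<Sum>m\<le>?n. (-1) ^ (m + 1) * mu_coef ?L (tlist x m) t0 z) =
      (\<Sum>m\<le>?n. complex_of_real c * P * (sgn (a m) *\<^sub>R ((1 - E m) * N m)))"
    by (rule sum.cong[OF refl], rule mum) simp
  also have "\<dots> = complex_of_real c * P * (\<Sum>m\<le>?n. sgn (a m) *\<^sub>R ((1 - E m) * N m))"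
    by (simp add: sum_distrib_left)
  also have "\<dots> = 0" unfolding cg by simp
  finally show ?thesis .
qed

end


lemma take_drop_skip:
  assumes len: "length C = CARD('n::finite) + 1" and i: "i \<in> {1..CARD('n)+1}" and j: "j < CARD('n)"
  shows "(take (i - 1) C @ drop i C) ! j = C ! skip (i - 1) j"
proof -
  have i1: "1 \<le> i" "i \<le> CARD('n) + 1" using i by auto
  have "min (length C) (i - 1) = i - 1" by (rule min_absorb2) (use len i1 in linarith)
  then have lt: "length (take (i - 1) C) = i - 1" by simp
  show ?thesis
  proof (cases "j < i - 1")
    case True
    then show ?thesis using lt by (simp add: nth_append skip_def)
  next
    case False
    then have "(take (i - 1) C @ drop i C) ! j = drop i C ! (j - (i - 1))" using lt by (simp add: nth_append)
    also have "\<dots> = C ! (i + (j - (i - 1)))" by (rule nth_drop) (use len i1 j False in linarith)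
    also have "i + (j - (i - 1)) = Suc j" using i1 False by linarith
    finally show ?thesis using False by (simp add: skip_def)
  qed
qed

lemma defines_hyp_par:
  assumes u: "defines_hyp u H" and v: "defines_hyp v H"
  shows "\<exists>r. r \<noteq> 0 \<and> u = r *\<^sub>R (v :: real^'n)"
proof -
  have v0: "v \<noteq> 0" and u0: "u \<noteq> 0" and Hu: "H = {w. u \<bullet> w = 0}" and Hv: "H = {w. v \<bullet> w = 0}"
    using u v by (auto simp: defines_hyp_def)
  define r where "r = (u \<bullet> v) / (v \<bullet> v)"
  define w where "w = u - r *\<^sub>R v"
  have "v \<bullet> w = 0" unfolding w_def r_def using v0 by (simp add: inner_diff_right inner_commute)
  then have "w \<in> H" using Hv by (simp add: inner_commute)
  then have "u \<bullet> w = 0" using Hu by simp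
  then have "(u - r *\<^sub>R v) \<bullet> w = 0" using \<open>v \<bullet> w = 0\<close> by (simp add: inner_diff_left)
  then have "w \<bullet> w = 0" unfolding w_def[symmetric] .
  then have "u = r *\<^sub>R v" unfolding w_def by simp
  moreover have "r \<noteq> 0" using u0 \<open>u = r *\<^sub>R v\<close> by auto
  ultimately show ?thesis by blast
qed

lemma skip_surj: "m \<le> n \<Longrightarrow> k \<le> n \<Longrightarrow> k \<noteq> m \<Longrightarrow> \<exists>j<n. skip m j = k"
  by (rule exI[of _ "if k < m then k else k - 1"]) (auto simp: skip_def)

lemma defines_hyp_eq: "defines_hyp x H \<Longrightarrow> H = {v. x \<bullet> v = 0}"
  by (simp add: defines_hyp_def)

theorem mainTheorem6:
  fixes \<Gamma> :: "(real^'n) set" and \<A> :: "(real^'n) set set" and \<Delta> :: "(real^'n) set"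
    and C :: "(real^'n) set list"
    and X :: "nat \<Rightarrow> (real^'n) list" and T :: "nat \<Rightarrow> real^'n"
  defines "\<Lambda> \<equiv> dual_lattice \<Gamma>"
  assumes lat: "full_lattice \<Gamma>"
    and finA: "finite \<A>"
    and hypA: "\<forall>H\<in>\<A>. \<exists>x\<in>\<Lambda>. defines_hyp x H"
    and essA: "\<Inter>\<A> = {0}"
    and cham: "\<Delta> \<in> components (chamber_set \<Lambda> \<A>)"
    and Cdist: "distinct C" and Clen: "length C = CARD('n) + 1"
    and Ccirc: "is_circuit \<A> (set C)"
    and Xlen: "\<forall>i\<in>{1..CARD('n)+1}. length (X i) = CARD('n)"
    and Xdef: "\<forall>i\<in>{1..CARD('n)+1}. \<forall>j<CARD('n).
                 X i ! j \<in> \<Lambda> \<and> defines_hyp (X i ! j) ((take (i - 1) C @ drop i C) ! j)"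
    and Tin: "\<forall>i\<in>{1..CARD('n)+1}. T i \<in> \<Delta>"
  shows "\<forall>z :: complex^'n.
           (\<forall>i\<in>{1..CARD('n)+1}. \<forall>j<CARD('n). exp (cpair (X i ! j) z) \<noteq> 1) \<longrightarrow>
           (\<Sum>i=1..CARD('n)+1. (-1) ^ i * mu_coef \<Lambda> (X i) (T i) z) = 0"
proof (intro allI impI)
  fix z :: "complex^'n"
  assume Hz: "\<forall>i\<in>{1..CARD('n)+1}. \<forall>j<CARD('n). exp (cpair (X i ! j) z) \<noteq> 1"
  let ?n = "CARD('n)"
  let ?L = "dual_lattice \<Gamma>"
  have n1: "?n \<ge> 1" by simp
  have CA: "set C \<subseteq> \<A>" using Ccirc by (simp add: is_circuit_def)
  have Xd: "X i ! j \<in> ?L" "defines_hyp (X i ! j) (C ! skip (i - 1) j)"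
    if "i \<in> {1..?n+1}" "j < ?n" for i j
  proof -
    have "X i ! j \<in> ?L \<and> defines_hyp (X i ! j) ((take (i - 1) C @ drop i C) ! j)"
      using Xdef that unfolding \<Lambda>_def by blast
    then show "X i ! j \<in> ?L" "defines_hyp (X i ! j) (C ! skip (i - 1) j)"
      unfolding take_drop_skip[OF Clen that] by auto
  qed
  have XE: "exp (cpair (X i ! j) z) \<noteq> 1" if "i \<in> {1..?n+1}" "j < ?n" for i j
    using Hz that by blast
  define x where "x k = (if k = 0 then X 2 ! 0 else X 1 ! (k - 1))" for k
  have xprop: "x k \<in> ?L \<and> defines_hyp (x k) (C ! k) \<and> exp (cpair (x k) z) \<noteq> 1" if k: "k \<le> ?n" for k
  proof (cases "k = 0")
    case True
    have i: "2 \<in> {1..?n+1}" using n1 by simp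
    have "skip (2 - 1) 0 = 0" by (simp add: skip_def)
    then show ?thesis using Xd[OF i, of 0] XE[OF i, of 0] True n1 unfolding x_def by simp
  next
    case False
    have i: "1 \<in> {1..?n+1}" by simp
    have j: "k - 1 < ?n" using k False by simp
    have "skip (1 - 1) (k - 1) = k" using False by (simp add: skip_def)
    then show ?thesis using Xd[OF i j] XE[OF i j] False unfolding x_def by simp
  qed
  have skipC: "C ! skip m j \<in> set C - {C ! m}" if "m \<le> ?n" "j < ?n" for m j
  proof -
    have "skip m j < length C" using skip_lt[OF that] Clen by simp
    moreover have "C ! skip m j \<noteq> C ! m"
      using Cdist skip_ne[of m j] calculation that Clen by (simp add: nth_eq_iff_index_eq)
    ultimately show ?thesis by simp
  qed
  have goodAL: "goodA ?L \<A> L"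
    if m: "m \<le> ?n" and len: "length L = ?n" and Lp: "\<And>j. j < ?n \<Longrightarrow> L!j \<in> ?L \<and> defines_hyp (L!j) (C ! skip m j)"
    for m L
  proof -
    let ?S = "set C - {C ! m}"
    have "C ! m \<in> set C" using m Clen by simp
    then have "hyp_indep ?S" using Ccirc by (simp add: is_circuit_def)
    then obtain f where f: "\<forall>H\<in>?S. defines_hyp (f H) H" "inj_on f ?S" "independent (f ` ?S)"
      by (auto simp: hyp_indep_def)
    define F where "F = map (\<lambda>j. f (C ! skip m j)) [0..<?n]"
    have Fnth: "F ! j = f (C ! skip m j)" if "j < ?n" for j using that by (simp add: F_def)
    have Simg: "?S = (\<lambda>j. C ! skip m j) ` {..<?n}"
    proof (intro set_eqI iffI)
      fix H assume H: "H \<in> ?S"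
      then obtain k where k: "k < length C" "C ! k = H" by (auto simp: in_set_conv_nth)
      have "k \<noteq> m" using H k by auto
      moreover have "k \<le> ?n" using k Clen by simp
      ultimately obtain j where "j < ?n" "skip m j = k" using skip_surj[OF m] by blast
      then show "H \<in> (\<lambda>j. C ! skip m j) ` {..<?n}" using k by auto
    next
      fix H assume "H \<in> (\<lambda>j. C ! skip m j) ` {..<?n}"
      then show "H \<in> ?S" using skipC[OF m] by auto
    qed
    have gF: "goodl F"
    proof -
      have "set F = f ` ?S" unfolding Simg F_def by auto
      moreover have "distinct F"
        unfolding F_def distinct_map
      proof
        show "distinct [0..<?n]" by simp
        show "inj_on (\<lambda>j. f (C ! skip m j)) (set [0..<?n])"
        proof (rule inj_onI)
          fix j1 j2 assume j: "j1 \<in> set [0..<?n]" "j2 \<in> set [0..<?n]" "f (C ! skip m j1) = f (C ! skip m j2)"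
          have j': "j1 < ?n" "j2 < ?n" using j by auto
          have "C ! skip m j1 = C ! skip m j2" using f(2) skipC[OF m j'(1)] skipC[OF m j'(2)] j(3) by (simp add: inj_on_def)
          moreover have "skip m j1 < length C" "skip m j2 < length C" using skip_lt[OF m] j' Clen by (simp_all add: less_Suc_eq_le)
          ultimately have "skip m j1 = skip m j2" using Cdist nth_eq_iff_index_eq by blast
          then show "j1 = j2" using skip_inj[of m UNIV] by (simp add: inj_on_def)
        qed
      qed
      ultimately show ?thesis using f(3) by (simp add: goodl_def F_def)
    qed
    have gL: "goodl L"
    proof (rule goodl_par[OF gF len])
      fix j assume j: "j < ?n"
      have "defines_hyp (F ! j) (C ! skip m j)" using f(1) skipC[OF m j] Fnth[OF j] by simp
      then show "\<exists>c. c \<noteq> 0 \<and> L ! j = c *\<^sub>R F ! j" using defines_hyp_par Lp[OF j] by blast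
    qed
    have "set L \<subseteq> ?L" using Lp len by (auto simp: in_set_conv_nth)
    moreover have "\<forall>e\<in>set L. {v. e \<bullet> v = 0} \<in> \<A>"
    proof
      fix e assume "e \<in> set L"
      then obtain j where j: "j < ?n" "e = L ! j" using len by (auto simp: in_set_conv_nth)
      have "{v. e \<bullet> v = 0} = C ! skip m j" using defines_hyp_eq Lp[OF j(1)] j(2) by metis
      moreover have "C ! skip m j \<in> \<A>" using skipC[OF m j(1)] CA by blast
      ultimately show "{v. e \<bullet> v = 0} \<in> \<A>" by simp
    qed
    ultimately show ?thesis using gL by (simp add: goodA_def)
  qed
  have goodT: "goodA ?L \<A> (tlist x m)" if m: "m \<le> ?n" for m
  proof (rule goodAL[OF m])
    fix j assume j: "j < ?n"
    show "tlist x m ! j \<in> ?L \<and> defines_hyp (tlist x m ! j) (C ! skip m j)"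
      using xprop[OF skip_lt[OF m j]] j by (simp add: tlist_nth)
  qed simp
  have iX: "Suc m \<in> {1..?n+1}" if "m \<le> ?n" for m using that by simp
  have goodX: "goodA ?L \<A> (X (Suc m))" if m: "m \<le> ?n" for m
  proof (rule goodAL[OF m])
    show "length (X (Suc m)) = ?n" using Xlen iX[OF m] by blast
    fix j assume j: "j < ?n"
    show "X (Suc m) ! j \<in> ?L \<and> defines_hyp (X (Suc m) ! j) (C ! skip m j)"
      using Xd[OF iX[OF m] j] by simp
  qed
  have gn: "goodl (tlist x ?n)" using goodT[of ?n] by (simp add: goodA_def)
  define a where "a k = (if k < ?n then crd (tlist x ?n) (x ?n) k else -1)" for k
  have rel: "(\<Sum>k\<le>?n. a k *\<^sub>R x k) = 0"
  proof -
    have "(\<Sum>k\<le>?n. a k *\<^sub>R x k) = (\<Sum>k<?n. a k *\<^sub>R x k) + a ?n *\<^sub>R x ?n"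
      by (simp add: lessThan_Suc_atMost[symmetric])
    also have "(\<Sum>k<?n. a k *\<^sub>R x k) = (\<Sum>k<?n. crd (tlist x ?n) (x ?n) k *\<^sub>R tlist x ?n ! k)"
      by (rule sum.cong) (simp_all add: a_def tlist_last_nth)
    also have "\<dots> = x ?n" by (rule crd_sum[OF gn])
    finally show ?thesis by (simp add: a_def)
  qed
  have a0: "a k \<noteq> 0" if k: "k \<le> ?n" for k
  proof (cases "k = ?n")
    case True then show ?thesis by (simp add: a_def)
  next
    case False
    then have kn: "k < ?n" using k by simp
    show ?thesis
    proof
      assume ak: "a k = 0"
      have gk: "goodl (tlist x k)" using goodT[OF k] by (simp add: goodA_def)
      have "(\<Sum>j<?n. a (skip k j) *\<^sub>R tlist x k ! j) = (\<Sum>j<?n. a (skip k j) *\<^sub>R x (skip k j))"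
        by (rule sum.cong) (simp_all add: tlist_nth)
      also have "\<dots> = (\<Sum>k'\<in>{..?n} - {k}. a k' *\<^sub>R x k')" by (rule sum_skip[OF k])
      also have "\<dots> = (\<Sum>k'\<le>?n. a k' *\<^sub>R x k') - a k *\<^sub>R x k" using k by (simp add: sum_diff1)
      also have "\<dots> = 0" using rel ak by simp
      finally have "a (skip k (?n - 1)) = 0"
        using goodl_lincomb_zero[OF gk, of "\<lambda>j. a (skip k j)" "?n - 1"] n1 by simp
      moreover have "skip k (?n - 1) = ?n" using kn by (simp add: skip_def)
      ultimately show False by (simp add: a_def)
    qed
  qed
  have xL: "x k \<in> ?L" if "k \<le> ?n" for k using xprop[OF that] by blast
  have Ez: "exp (cpair (x k) z) \<noteq> 1" if "k \<le> ?n" for k using xprop[OF that] by blast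
  have Dsub: "\<Delta> \<subseteq> chamber_set ?L \<A>" using in_components_subset[OF cham] unfolding \<Lambda>_def .
  have cham': "\<Delta> \<in> components (chamber_set ?L \<A>)" using cham unfolding \<Lambda>_def .
  define t0 where "t0 = T 1"
  have t0D: "t0 \<in> \<Delta>" using Tin unfolding t0_def by simp
  have t0c: "t0 \<in> chamber_set ?L \<A>" using t0D Dsub by blast
  have trm: "mu_coef ?L (X (Suc m)) (T (Suc m)) z = mu_coef ?L (tlist x m) t0 z" if m: "m \<le> ?n" for m
  proof -
    have TD: "T (Suc m) \<in> \<Delta>" using Tin iX[OF m] by blast
    have Tc: "T (Suc m) \<in> chamber_set ?L \<A>" using TD Dsub by blast
    have "mu_coef ?L (X (Suc m)) (T (Suc m)) z = mu_coef ?L (tlist x m) (T (Suc m)) z"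
    proof (rule mu_par[OF lat goodT[OF m] goodX[OF m] Tc])
      fix k assume k: "k < ?n"
      have h1: "defines_hyp (X (Suc m) ! k) (C ! skip m k)" using Xd[OF iX[OF m] k] by simp
      have h2: "defines_hyp (tlist x m ! k) (C ! skip m k)" using xprop[OF skip_lt[OF m k]] k by (simp add: tlist_nth)
      show "\<exists>r. r \<noteq> 0 \<and> X (Suc m) ! k = r *\<^sub>R tlist x m ! k" by (rule defines_hyp_par[OF h1 h2])
      show "exp (cpair (tlist x m ! k) z) \<noteq> 1" using Ez[OF skip_lt[OF m k]] k by (simp add: tlist_nth)
      show "exp (cpair (X (Suc m) ! k) z) \<noteq> 1" using XE[OF iX[OF m] k] .
    qed
    also have "\<dots> = mu_coef ?L (tlist x m) t0 z"
    proof -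
      have gT: "goodl (tlist x m)" "set (tlist x m) \<subseteq> ?L" "\<forall>e\<in>set (tlist x m). {v. e \<bullet> v = 0} \<in> \<A>"
        using goodT[OF m] unfolding goodA_def by blast+
      have "acell ?L (tlist x m) (T (Suc m)) = acell ?L (tlist x m) t0"
        by (rule acell_const[OF gT cham' TD t0D])
      then show ?thesis unfolding mu_coef_def acell_mu_eq by simp
    qed
    finally show ?thesis .
  qed
  have "(\<Sum>i=1..?n+1. (-1) ^ i * mu_coef \<Lambda> (X i) (T i) z) = (\<Sum>i=Suc 0..Suc ?n. (-1) ^ i * mu_coef ?L (X i) (T i) z)"
    unfolding \<Lambda>_def by simp
  also have "\<dots> = (\<Sum>m=0..?n. (-1) ^ (Suc m) * mu_coef ?L (X (Suc m)) (T (Suc m)) z)"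
    by (rule sum.shift_bounds_cl_Suc_ivl)
  also have "\<dots> = (\<Sum>m\<le>?n. (-1) ^ (m + 1) * mu_coef ?L (tlist x m) t0 z)"
    unfolding atLeast0AtMost by (rule sum.cong) (simp_all add: trm)
  also have "\<dots> = 0" by (rule final_sum[OF lat goodT t0c rel a0 xL Ez])
  finally show "(\<Sum>i=1..?n+1. (-1) ^ i * mu_coef \<Lambda> (X i) (T i) z) = 0" .
qed


end
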